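(* In a finite dynamic game as described in the context, if $K=(K^i)_{i\in\mathcal{I}}$ is mutually sufficient information, then there exists at least one $K$-based sequential equilibrium, i.e. a sequential equilibrium $(\rho,Q)$ in which $\rho$ is a $K$-based strategy profile.
   Context: Game model: finite set of players $\mathcal{I}$, times $\mathcal{T}=\{1,\dots,T\}$. At time $t$ each player $i$ takes action $U_t^i\in\mathcal{U}_t^i$, obtains reward $R_t^i\in[-1,1]$ and learns new information $Z_t^i\in\mathcal{Z}_t^i$. There is a state $X_t\in\mathcal{X}_t$ with $(X_{t+1},Z_t,R_t)=f_t(X_t,U_t,W_t)$ for fixed functions $f_t$. Primitive random variables $(X_1,H_1)$ (with $H_1=(H_1^i)_i$ initial information) and $W_1,\dots,W_T$ are mutually independent with commonly known distributions. All sets $\mathcal{X}_t,\mathcal{U}_t,\mathcal{Z}_t,\mathcal{W}_t,\mathcal{H}_1$ are finite. Perfect recall: $H_t^i=(H_1^i,Z_{1:t-1}^i)\in\mathcal{H}_t^i$, and $U_t^i$ is a component of $Z_t^i$. Behavioral strategy $g_t^i:\mathcal{H}_t^i\to\Delta(\mathcal{U}_t^i)$; payoff $J^i(g)=\mathbb{E}^g[\sum_t R_t^i]$. A realization is admissible under a partial profile if it has positive probability under some completion. Sequential equilibrium (SE): for a profile $g$ and functions $Q=(Q_t^i)$, $Q_t^i:\mathcal{H}_t^i\times\mathcal{U}_t^i\to\mathbb{R}$: $g$ is sequentially rational under $Q$ if $\mathrm{supp}(g_t^i(h_t^i))\subseteq\arg\max_{u}Q_t^i(h_t^i,u)$ for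 all $i,t,h_t^i$; $Q$ is fully consistent with $g$ if there is a sequence $(g^{(n)},Q^{(n)})\to(g,Q)$ with each $g^{(n)}$ fully mixed (every action has positive probability at every history) and $Q_\tau^{(n),i}(h_\tau^i,u_\tau^i)=\mathbb{E}^{g^{(n)}}[\sum_{t=\tau}^T R_t^i\mid h_\tau^i,u_\tau^i]$ for all $i,\tau,h_\tau^i,u_\tau^i$. $(g,Q)$ is an SE if both hold. Compression: $K_1^i=\iota_1^i(H_1^i)$, $K_t^i=\iota_t^i(K_{t-1}^i,Z_{t-1}^i)$ for fixed maps, finite value sets $\mathcal{K}_t^i$; $k_t^i$ is the compression of $h_t^i$; a $K^i$-based strategy has $\rho_t^i:\mathcal{K}_t^i\to\Delta(\mathcal{U}_t^i)$. Information state: given $g^{-i}$, $K^i$ is an information state under $g^{-i}$ if there exist $P_t^{i,g^{-i}}:\mathcal{K}_t^i\times\mathcal{U}_t^i\to\Delta(\mathcal{K}_{t+1}^i)$, $r_t^{i,g^{-i}}:\mathcal{K}_t^i\times\mathcal{U}_t^i\to[-1,1]$ with $\Pr^{g^i,g^{-i}}(k_{t+1}^i\mid h_t^i,u_t^i)=P_t^{i,g^{-i}}(k_{t+1}^i\mid k_t^i,u_t^i)$ ($t<T$) and $\mathbb{E}^{g^i,g^{-i}}[R_t^i\mid h_t^i,u_t^i]=r_t^{i,g^{-i}}(k_t^i,u_t^i)$ for all $g^i$ and all $(h_t^i,u_t^i)$ admissible under $(g^i,g^{-i})$. $K$ is mutually sufficient information (MSI) if for every $i$ and every profile $\rho^{-i}$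 of $K^j$-based strategies of players $j\neq i$, $K^i$ is an information state under $\rho^{-i}$. *)

theory Defs
  imports "HOL-Probability.Probability"
begin

(* Conventions: times are 0-based, t = 0..T-1 (paper's time t+1).
   Player i's information Z_t^i is the pair (U_t^i, Y_t^i), so that U_t^i is a
   component of Z_t^i (perfect recall).  A history h_t^i is (H_1^i, [Z_0^i,...,Z_{t-1}^i]). *)

record ('p,'x,'u,'y,'w,'h) game =
  init    :: "('x \<times> ('p \<Rightarrow> 'h)) pmf"
  noise   :: "nat \<Rightarrow> 'w pmf"
  dyn     :: "nat \<Rightarrow> 'x \<Rightarrow> ('p \<Rightarrow> 'u) \<Rightarrow> 'w \<Rightarrow> 'x \<times> ('p \<Rightarrow> 'y) \<times> ('p \<Rightarrow> real)"
             (* f_t : (X_t,U_t,W_t) \<mapsto> (X_{t+1}, observations Y_t, rewards R_t) *)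
  acts    :: "nat \<Rightarrow> 'p \<Rightarrow> 'u set"
  horizon :: nat

definition wf_game :: "('p,'x,'u,'y,'w,'h) game \<Rightarrow> bool" where
  "wf_game G \<longleftrightarrow>
     (\<forall>t<horizon G. \<forall>i. acts G t i \<noteq> {}) \<and>
     (\<forall>t<horizon G. \<forall>x u w j. (\<forall>k. u k \<in> acts G t k) \<longrightarrow>
         (let r = snd (snd (dyn G t x u w)) in -1 \<le> r j \<and> r j \<le> 1))"

type_synonym ('h,'u,'y) hist = "'h \<times> ('u \<times> 'y) list"
type_synonym ('p,'x,'u,'w,'h) outcome = "'x \<times> ('p \<Rightarrow> 'h) \<times> (('p \<Rightarrow> 'u) \<times> 'w) list"
type_synonym ('p,'h,'u,'y) profile = "nat \<Rightarrow> 'p \<Rightarrow> ('h,'u,'y) hist \<Rightarrow> 'u pmf"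

fun trace :: "(nat \<Rightarrow> 'x \<Rightarrow> ('p \<Rightarrow> 'u) \<Rightarrow> 'w \<Rightarrow> 'x \<times> ('p \<Rightarrow> 'y) \<times> ('p \<Rightarrow> real))
      \<Rightarrow> nat \<Rightarrow> 'x \<Rightarrow> (('p \<Rightarrow> 'u) \<times> 'w) list
      \<Rightarrow> ('x \<times> ('p \<Rightarrow> 'u) \<times> ('p \<Rightarrow> 'y) \<times> ('p \<Rightarrow> real)) list" where
  "trace f t x [] = []"
| "trace f t x ((u, w) # rest) =
     (case f t x u w of (x', y, r) \<Rightarrow> (x, u, y, r) # trace f (Suc t) x' rest)"

definition traj :: "('p,'x,'u,'y,'w,'h) game \<Rightarrow> ('p,'x,'u,'w,'h) outcome
      \<Rightarrow> ('x \<times> ('p \<Rightarrow> 'u) \<times> ('p \<Rightarrow> 'y) \<times> ('p \<Rightarrow> real)) list" where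
  "traj G \<omega> = (case \<omega> of (x1, h1, s) \<Rightarrow> trace (dyn G) 0 x1 s)"

definition hist :: "('p,'x,'u,'y,'w,'h) game \<Rightarrow> 'p \<Rightarrow> ('p,'x,'u,'w,'h) outcome \<Rightarrow> nat
      \<Rightarrow> ('h,'u,'y) hist" where
  "hist G i \<omega> t = (fst (snd \<omega>) i,
      map (\<lambda>(x, u, y, r). (u i, y i)) (take t (traj G \<omega>)))"

definition action :: "('p,'x,'u,'w,'h) outcome \<Rightarrow> nat \<Rightarrow> 'p \<Rightarrow> 'u" where
  "action \<omega> t i = fst (snd (snd \<omega>) ! t) i"

definition reward :: "('p,'x,'u,'y,'w,'h) game \<Rightarrow> 'p \<Rightarrow> ('p,'x,'u,'w,'h) outcome \<Rightarrow> nat \<Rightarrow> real" where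
  "reward G i \<omega> t = (case traj G \<omega> ! t of (x, u, y, r) \<Rightarrow> r i)"

(* Law of the first t steps of play under behavioral profile g; primitive random
   variables (X_1,H_1), W_1, ..., W_T are mutually independent, players randomize
   independently given their own histories. *)
fun run :: "('p::finite,'x,'u,'y,'w,'h) game \<Rightarrow> ('p,'h,'u,'y) profile \<Rightarrow> nat
      \<Rightarrow> ('p,'x,'u,'w,'h) outcome pmf" where
  "run G g 0 = map_pmf (\<lambda>(x, h). (x, h, [])) (init G)"
| "run G g (Suc t) =
     bind_pmf (run G g t) (\<lambda>\<omega>.
       bind_pmf (Pi_pmf UNIV undefined (\<lambda>i. g t i (hist G i \<omega> t))) (\<lambda>u.
         map_pmf (\<lambda>w. (fst \<omega>, fst (snd \<omega>), snd (snd \<omega>) @ [(u, w)])) (noise G t)))"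

definition play :: "('p::finite,'x,'u,'y,'w,'h) game \<Rightarrow> ('p,'h,'u,'y) profile
      \<Rightarrow> ('p,'x,'u,'w,'h) outcome pmf" where
  "play G g = run G g (horizon G)"

definition hu_event :: "('p,'x,'u,'y,'w,'h) game \<Rightarrow> nat \<Rightarrow> 'p \<Rightarrow> ('h,'u,'y) hist \<Rightarrow> 'u
      \<Rightarrow> ('p,'x,'u,'w,'h) outcome set" where
  "hu_event G t i h u = {\<omega>. hist G i \<omega> t = h \<and> action \<omega> t i = u}"

(* elementary conditional expectation E[X | A] (used only when P(A) > 0) *)
definition cond_exp :: "'a pmf \<Rightarrow> 'a set \<Rightarrow> ('a \<Rightarrow> real) \<Rightarrow> real" where
  "cond_exp M A X = (\<integral>\<omega>. indicator A \<omega> * X \<omega> \<partial>measure_pmf M) / measure_pmf.prob M A"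

definition valid_profile :: "('p,'x,'u,'y,'w,'h) game \<Rightarrow> ('p,'h,'u,'y) profile \<Rightarrow> bool" where
  "valid_profile G g \<longleftrightarrow> (\<forall>t<horizon G. \<forall>i h. set_pmf (g t i h) \<subseteq> acts G t i)"

definition fully_mixed :: "('p,'x,'u,'y,'w,'h) game \<Rightarrow> ('p,'h,'u,'y) profile \<Rightarrow> bool" where
  "fully_mixed G g \<longleftrightarrow> (\<forall>t<horizon G. \<forall>i h. set_pmf (g t i h) = acts G t i)"

definition seq_rational :: "('p,'x,'u,'y,'w,'h) game \<Rightarrow> ('p,'h,'u,'y) profile
      \<Rightarrow> (nat \<Rightarrow> 'p \<Rightarrow> ('h,'u,'y) hist \<Rightarrow> 'u \<Rightarrow> real) \<Rightarrow> bool" where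
  "seq_rational G g Q \<longleftrightarrow>
     (\<forall>t<horizon G. \<forall>i h. set_pmf (g t i h) \<subseteq>
        {u \<in> acts G t i. \<forall>u' \<in> acts G t i. Q t i h u' \<le> Q t i h u})"

definition fully_consistent :: "('p::finite,'x,'u,'y,'w,'h) game \<Rightarrow> ('p,'h,'u,'y) profile
      \<Rightarrow> (nat \<Rightarrow> 'p \<Rightarrow> ('h,'u,'y) hist \<Rightarrow> 'u \<Rightarrow> real) \<Rightarrow> bool" where
  "fully_consistent G g Q \<longleftrightarrow>
     (\<exists>gn Qn. (\<forall>n. valid_profile G (gn n) \<and> fully_mixed G (gn n)) \<and>
        (\<forall>t<horizon G. \<forall>i h u. (\<lambda>n. pmf (gn n t i h) u) \<longlonglongrightarrow> pmf (g t i h) u) \<and>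
        (\<forall>t<horizon G. \<forall>i h u. (\<lambda>n. Qn n t i h u) \<longlonglongrightarrow> Q t i h u) \<and>
        (\<forall>n. \<forall>\<tau><horizon G. \<forall>i h u.
           measure_pmf.prob (play G (gn n)) (hu_event G \<tau> i h u) > 0 \<longrightarrow>
           Qn n \<tau> i h u = cond_exp (play G (gn n)) (hu_event G \<tau> i h u)
                              (\<lambda>\<omega>. \<Sum>t\<in>{\<tau>..<horizon G}. reward G i \<omega> t)))"

definition sequential_equilibrium :: "('p::finite,'x,'u,'y,'w,'h) game \<Rightarrow> ('p,'h,'u,'y) profile
      \<Rightarrow> (nat \<Rightarrow> 'p \<Rightarrow> ('h,'u,'y) hist \<Rightarrow> 'u \<Rightarrow> real) \<Rightarrow> bool" where
  "sequential_equilibrium G g Q \<longleftrightarrow>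
     valid_profile G g \<and> seq_rational G g Q \<and> fully_consistent G g Q"

fun compress_aux :: "(nat \<Rightarrow> 'p \<Rightarrow> 'k \<Rightarrow> ('u \<times> 'y) \<Rightarrow> 'k) \<Rightarrow> 'p \<Rightarrow> 'k \<Rightarrow> nat
      \<Rightarrow> ('u \<times> 'y) list \<Rightarrow> 'k" where
  "compress_aux io i k t [] = k"
| "compress_aux io i k t (z # zs) = compress_aux io i (io t i k z) (Suc t) zs"

definition compress :: "('p \<Rightarrow> 'h \<Rightarrow> 'k) \<Rightarrow> (nat \<Rightarrow> 'p \<Rightarrow> 'k \<Rightarrow> ('u \<times> 'y) \<Rightarrow> 'k)
      \<Rightarrow> 'p \<Rightarrow> ('h,'u,'y) hist \<Rightarrow> 'k" where
  "compress io1 io i h = compress_aux io i (io1 i (fst h)) 0 (snd h)"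

definition kbased :: "('p \<Rightarrow> 'h \<Rightarrow> 'k) \<Rightarrow> (nat \<Rightarrow> 'p \<Rightarrow> 'k \<Rightarrow> ('u \<times> 'y) \<Rightarrow> 'k)
      \<Rightarrow> (nat \<Rightarrow> 'p \<Rightarrow> 'k \<Rightarrow> 'u pmf) \<Rightarrow> ('p,'h,'u,'y) profile" where
  "kbased io1 io \<rho> = (\<lambda>t i h. \<rho> t i (compress io1 io i h))"

definition valid_kstrat :: "('p,'x,'u,'y,'w,'h) game \<Rightarrow> (nat \<Rightarrow> 'p \<Rightarrow> 'k \<Rightarrow> 'u pmf) \<Rightarrow> bool" where
  "valid_kstrat G \<rho> \<longleftrightarrow> (\<forall>t<horizon G. \<forall>i k. set_pmf (\<rho> t i k) \<subseteq> acts G t i)"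

definition upd_player :: "('p,'h,'u,'y) profile \<Rightarrow> 'p \<Rightarrow> (nat \<Rightarrow> ('h,'u,'y) hist \<Rightarrow> 'u pmf)
      \<Rightarrow> ('p,'h,'u,'y) profile" where
  "upd_player g i gi = (\<lambda>t j. if j = i then gi t else g t j)"

(* K^i is an information state under g^{-i} (the i-th component of g is ignored) *)
definition info_state :: "('p::finite,'x,'u,'y,'w,'h) game \<Rightarrow> ('p \<Rightarrow> 'h \<Rightarrow> 'k)
      \<Rightarrow> (nat \<Rightarrow> 'p \<Rightarrow> 'k \<Rightarrow> ('u \<times> 'y) \<Rightarrow> 'k) \<Rightarrow> 'p \<Rightarrow> ('p,'h,'u,'y) profile \<Rightarrow> bool" where
  "info_state G io1 io i g \<longleftrightarrow>
     (\<exists>(P :: nat \<Rightarrow> 'k \<Rightarrow> 'u \<Rightarrow> 'k pmf) (r :: nat \<Rightarrow> 'k \<Rightarrow> 'u \<Rightarrow> real).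
        (\<forall>t k u. -1 \<le> r t k u \<and> r t k u \<le> 1) \<and>
        (\<forall>gi. (\<forall>t<horizon G. \<forall>h. set_pmf (gi t h) \<subseteq> acts G t i) \<longrightarrow>
          (let M = play G (upd_player g i gi) in
           \<forall>t<horizon G. \<forall>h u. measure_pmf.prob M (hu_event G t i h u) > 0 \<longrightarrow>
             (Suc t < horizon G \<longrightarrow> (\<forall>k'.
                cond_exp M (hu_event G t i h u)
                  (\<lambda>\<omega>. indicator {\<omega>. compress io1 io i (hist G i \<omega> (Suc t)) = k'} \<omega>)
                = pmf (P t (compress io1 io i h) u) k')) \<and>
             cond_exp M (hu_event G t i h u) (\<lambda>\<omega>. reward G i \<omega> t)
                = r t (compress io1 io i h) u)))"

definition mutually_sufficient :: "('p::finite,'x,'u,'y,'w,'h) game \<Rightarrow> ('p \<Rightarrow> 'h \<Rightarrow> 'k)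
      \<Rightarrow> (nat \<Rightarrow> 'p \<Rightarrow> 'k \<Rightarrow> ('u \<times> 'y) \<Rightarrow> 'k) \<Rightarrow> bool" where
  "mutually_sufficient G io1 io \<longleftrightarrow>
     (\<forall>i \<rho>. valid_kstrat G \<rho> \<longrightarrow> info_state G io1 io i (kbased io1 io \<rho>))"

end

theory Submission
  imports Defs
begin

lemma finite_BW:
  fixes X :: "'j \<Rightarrow> nat \<Rightarrow> real"
  assumes "finite J" and "\<And>j m. j \<in> J \<Longrightarrow> \<bar>X j m\<bar> \<le> B"
  shows "\<exists>\<sigma>. strict_mono \<sigma> \<and> (\<forall>j\<in>J. convergent (\<lambda>m. X j (\<sigma> m)))"
  using assms
proof (induction J rule: finite_induct)
  case empty
  then show ?case by (auto intro: strict_mono_id[unfolded id_def])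
next
  case (insert j J)
  then obtain \<sigma> where s: "strict_mono \<sigma>" "\<forall>j\<in>J. convergent (\<lambda>m. X j (\<sigma> m))"
    by auto
  have "bounded (range (\<lambda>m. X j (\<sigma> m)))"
    unfolding bounded_iff using insert.prems by auto
  then obtain l r where r: "strict_mono r" "((\<lambda>m. X j (\<sigma> m)) \<circ> r) \<longlonglongrightarrow> l"
    using bounded_imp_convergent_subsequence by blast
  have "strict_mono (\<sigma> \<circ> r)" using s r by (simp add: strict_mono_o)
  moreover have "\<forall>j'\<in>insert j J. convergent (\<lambda>m. X j' ((\<sigma> \<circ> r) m))"
  proof
    fix j' assume "j' \<in> insert j J"
    then show "convergent (\<lambda>m. X j' ((\<sigma> \<circ> r) m))"
    proof
      assume "j' = j" then show ?thesis using r by (auto simp: convergent_def o_def)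
    next
      assume "j' \<in> J"
      then obtain L where "(\<lambda>m. X j' (\<sigma> m)) \<longlonglongrightarrow> L" using s by (auto simp: convergent_def)
      from LIMSEQ_subseq_LIMSEQ[OF this r(1)] show ?thesis by (auto simp: convergent_def o_def)
    qed
  qed
  ultimately show ?case by blast
qed

definition cube :: "'a set \<Rightarrow> ('a \<Rightarrow> real) set" where
  "cube I = {x. (\<forall>i\<in>I. 0 \<le> x i \<and> x i \<le> 1) \<and> (\<forall>i. i \<notin> I \<longrightarrow> x i = 0)}"

lemma brouwer_fin:
  fixes f :: "('a \<Rightarrow> real) \<Rightarrow> ('a \<Rightarrow> real)" and I :: "'a set"
  assumes fin: "finite I"
    and into: "\<And>x. x \<in> cube I \<Longrightarrow> f x \<in> cube I"
    and cont: "\<And>X x i. (\<And>m. X m \<in> cube I) \<Longrightarrow> x \<in> cube I \<Longrightarrow>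
                 (\<And>i. i \<in> I \<Longrightarrow> (\<lambda>m. X m i) \<longlonglongrightarrow> x i) \<Longrightarrow> i \<in> I \<Longrightarrow>
                 (\<lambda>m. f (X m) i) \<longlonglongrightarrow> f x i"
  shows "\<exists>x\<in>cube I. f x = x"
proof -
  define n where "n = card I"
  obtain b where b: "bij_betw b {0..<n} I"
    using ex_bij_betw_nat_finite[OF fin] unfolding n_def by blast
  define bi where "bi = inv_into {0..<n} b"
  have bi_I: "bi a < n" "b (bi a) = a" if "a \<in> I" for a
    using b that unfolding bi_def bij_betw_def
    by (auto intro: inv_into_into f_inv_into_f)
  have b_I: "b j \<in> I" "bi (b j) = j" if "j < n" for j
    using b that unfolding bi_def bij_betw_def
    by (auto intro: inv_into_f_f)
  define pt :: "nat \<Rightarrow> (nat \<Rightarrow> nat) \<Rightarrow> 'a \<Rightarrow> real" where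
    "pt p q = (\<lambda>a. if a \<in> I then real (q (bi a)) / real p else 0)" for p q
  have pt_cube: "pt p q \<in> cube I" if "p > 0" "\<forall>j<n. q j \<le> p" for p q
    using that bi_I unfolding cube_def pt_def by auto
  define lab :: "nat \<Rightarrow> (nat \<Rightarrow> nat) \<Rightarrow> nat \<Rightarrow> nat" where
    "lab p q j = (let x = pt p q; a = b j in
        if x a = 0 then 0 else if x a = 1 then 1 else if x a \<le> f x a then 0 else 1)" for p q j
  have lab0: "pt p q (b j) \<le> f (pt p q) (b j)"
    if "p > 0" "\<forall>j<n. q j \<le> p" "j < n" "lab p q j = 0" for p q j
  proof -
    have "f (pt p q) \<in> cube I" using into pt_cube that by auto
    then have "0 \<le> f (pt p q) (b j)" using b_I[OF \<open>j<n\<close>] unfolding cube_def by auto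
    then show ?thesis using that(4) unfolding lab_def Let_def by (auto split: if_splits)
  qed
  have lab1: "f (pt p q) (b j) \<le> pt p q (b j)"
    if "p > 0" "\<forall>j<n. q j \<le> p" "j < n" "lab p q j = 1" for p q j
  proof -
    have "f (pt p q) \<in> cube I" using into pt_cube that by auto
    then have "f (pt p q) (b j) \<le> 1" using b_I[OF \<open>j<n\<close>] unfolding cube_def by auto
    then show ?thesis using that(4) unfolding lab_def Let_def by (auto split: if_splits)
  qed
  have step: "\<exists>q. (\<forall>i<n. q i < p) \<and> (\<forall>j<n. \<exists>r s. (\<forall>i<n. q i \<le> r i \<and> r i \<le> q i + 1) \<and>
       (\<forall>i<n. q i \<le> s i \<and> s i \<le> q i + 1) \<and>
       pt p r (b j) \<le> f (pt p r) (b j) \<and> f (pt p s) (b j) \<le> pt p s (b j))" if p0: "p > 0" for p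
  proof -
    have k1: "\<forall>x. (\<forall>i<n. x i \<le> p) \<longrightarrow> (\<forall>i<n. lab p x i = 0 \<or> lab p x i = 1)"
      unfolding lab_def Let_def by auto
    have k2: "\<forall>x. (\<forall>i<n. x i \<le> p) \<longrightarrow> (\<forall>i<n. x i = 0 \<longrightarrow> lab p x i = 0)"
      using b_I unfolding lab_def Let_def pt_def by auto
    have k3: "\<forall>x. (\<forall>i<n. x i \<le> p) \<longrightarrow> (\<forall>i<n. x i = p \<longrightarrow> lab p x i = 1)"
      using b_I p0 unfolding lab_def Let_def pt_def by auto
    obtain q where q1: "\<forall>i<n. q i < p" and
      q2: "\<forall>i<n. \<exists>r s. (\<forall>j<n. q j \<le> r j \<and> r j \<le> q j + 1) \<and> (\<forall>j<n. q j \<le> s j \<and> s j \<le> q j + 1) \<and> lab p r i \<noteq> lab p s i"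
      using kuhn_lemma[OF p0 k1 k2 k3] by blast
    show ?thesis
    proof (intro exI conjI)
      show "\<forall>i<n. q i < p" by fact
      show "\<forall>j<n. \<exists>r s. (\<forall>i<n. q i \<le> r i \<and> r i \<le> q i + 1) \<and> (\<forall>i<n. q i \<le> s i \<and> s i \<le> q i + 1) \<and>
       pt p r (b j) \<le> f (pt p r) (b j) \<and> f (pt p s) (b j) \<le> pt p s (b j)"
      proof (intro allI impI)
      fix j assume j: "j < n"
      obtain r s where rs: "\<forall>j<n. q j \<le> r j \<and> r j \<le> q j + 1" "\<forall>j<n. q j \<le> s j \<and> s j \<le> q j + 1"
        "lab p r j \<noteq> lab p s j" using q2 j by blast
      have rp1: "r j' \<le> p" if "j' < n" for j'
        using rs(1) q1 that by (metis Suc_eq_plus1 Suc_le_eq le_trans)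
      have rp2: "s j' \<le> p" if "j' < n" for j'
        using rs(2) q1 that by (metis Suc_eq_plus1 Suc_le_eq le_trans)
      have rp: "\<forall>j<n. r j \<le> p" "\<forall>j<n. s j \<le> p" using rp1 rp2 by auto
      have l01: "lab p r j = 0 \<or> lab p r j = 1" "lab p s j = 0 \<or> lab p s j = 1"
        unfolding lab_def Let_def by auto
      show "\<exists>r s. (\<forall>i<n. q i \<le> r i \<and> r i \<le> q i + 1) \<and> (\<forall>i<n. q i \<le> s i \<and> s i \<le> q i + 1) \<and>
       pt p r (b j) \<le> f (pt p r) (b j) \<and> f (pt p s) (b j) \<le> pt p s (b j)"
      proof (cases "lab p r j = 0")
        case True
        then have "lab p s j = 1" using l01 rs(3) by auto
        then show ?thesis using True lab0[OF p0 rp(1) j] lab1[OF p0 rp(2) j] rs by blast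
      next
        case False
        then have "lab p r j = 1" "lab p s j = 0" using l01 rs(3) by auto
        then show ?thesis using lab0[OF p0 rp(2) j] lab1[OF p0 rp(1) j] rs by blast
      qed
      qed
    qed
  qed
  define good where "good m q \<longleftrightarrow> (\<forall>i<n. q i < Suc m) \<and> (\<forall>j<n. \<exists>r s. (\<forall>i<n. q i \<le> r i \<and> r i \<le> q i + 1) \<and>
       (\<forall>i<n. q i \<le> s i \<and> s i \<le> q i + 1) \<and>
       pt (Suc m) r (b j) \<le> f (pt (Suc m) r) (b j) \<and> f (pt (Suc m) s) (b j) \<le> pt (Suc m) s (b j))" for m q
  have exQ: "\<exists>q. good m q" for m unfolding good_def by (rule step) simp
  define Q where "Q m = (SOME q. good m q)" for m
  have gQ: "good m (Q m)" for m unfolding Q_def by (rule someI_ex[OF exQ])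
  have Q1: "\<forall>i<n. Q m i < Suc m" for m using gQ[of m] unfolding good_def by blast
  define good2 where "good2 m j rs \<longleftrightarrow> (\<forall>i<n. Q m i \<le> fst rs i \<and> fst rs i \<le> Q m i + 1) \<and>
       (\<forall>i<n. Q m i \<le> snd rs i \<and> snd rs i \<le> Q m i + 1) \<and>
       pt (Suc m) (fst rs) (b j) \<le> f (pt (Suc m) (fst rs)) (b j) \<and>
       f (pt (Suc m) (snd rs)) (b j) \<le> pt (Suc m) (snd rs) (b j)" for m j rs
  have exRS: "\<exists>rs. good2 m j rs" if "j < n" for m j
  proof -
    from gQ[of m] that obtain r s where "(\<forall>i<n. Q m i \<le> r i \<and> r i \<le> Q m i + 1) \<and>
       (\<forall>i<n. Q m i \<le> s i \<and> s i \<le> Q m i + 1) \<and>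
       pt (Suc m) r (b j) \<le> f (pt (Suc m) r) (b j) \<and> f (pt (Suc m) s) (b j) \<le> pt (Suc m) s (b j)"
      unfolding good_def by blast
    then have "good2 m j (r, s)" unfolding good2_def by simp
    then show ?thesis by blast
  qed
  define RS0 where "RS0 m j = (SOME rs. good2 m j rs)" for m j
  have gRS: "good2 m j (RS0 m j)" if "j < n" for m j
    unfolding RS0_def by (rule someI_ex[OF exRS[OF that]])
  define R where "R m j = fst (RS0 m j)" for m j
  define S where "S m j = snd (RS0 m j)" for m j
  have RS: "(\<forall>i<n. Q m i \<le> R m j i \<and> R m j i \<le> Q m i + 1) \<and>
       (\<forall>i<n. Q m i \<le> S m j i \<and> S m j i \<le> Q m i + 1) \<and>
       pt (Suc m) (R m j) (b j) \<le> f (pt (Suc m) (R m j)) (b j) \<and>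
       f (pt (Suc m) (S m j)) (b j) \<le> pt (Suc m) (S m j) (b j)" if "j < n" for m j
    using gRS[OF that, of m] unfolding good2_def R_def S_def by simp
  define z where "z m = pt (Suc m) (Q m)" for m
  have zc: "z m \<in> cube I" for m unfolding z_def using Q1 by (intro pt_cube) (auto simp: less_imp_le)
  have "\<exists>\<sigma>. strict_mono \<sigma> \<and> (\<forall>a\<in>I. convergent (\<lambda>m. z (\<sigma> m) a))"
  proof (rule finite_BW[OF fin, where B=1])
    fix a m assume "a \<in> I"
    then show "\<bar>z m a\<bar> \<le> 1" using zc[of m] unfolding cube_def by auto
  qed
  then obtain \<sigma> where \<sigma>: "strict_mono \<sigma>" "\<forall>a\<in>I. convergent (\<lambda>m. z (\<sigma> m) a)" by blast
  define zs where "zs a = (if a \<in> I then lim (\<lambda>m. z (\<sigma> m) a) else 0)" for a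
  have zs_lim: "(\<lambda>m. z (\<sigma> m) a) \<longlonglongrightarrow> zs a" if "a \<in> I" for a
    using \<sigma>(2) that unfolding zs_def by (auto simp: convergent_LIMSEQ_iff)
  have zs_cube: "zs \<in> cube I"
  proof -
    have "0 \<le> zs a \<and> zs a \<le> 1" if a: "a \<in> I" for a
    proof -
      have b01: "0 \<le> z m a \<and> z m a \<le> 1" for m using zc[of m] a unfolding cube_def by blast
      have "0 \<le> zs a"
        by (rule LIMSEQ_le_const[OF zs_lim[OF a]]) (use b01 in blast)
      moreover have "zs a \<le> 1"
        by (rule LIMSEQ_le_const2[OF zs_lim[OF a]]) (use b01 in blast)
      ultimately show ?thesis by simp
    qed
    then show ?thesis unfolding cube_def zs_def by auto
  qed
  have inv: "1 / real (Suc (\<sigma> m)) \<le> 1 / real (Suc m)" for m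
  proof -
    have "m \<le> \<sigma> m" by (rule seq_suble[OF \<sigma>(1)])
    then show ?thesis by (simp add: frac_le)
  qed
  have lim0: "(\<lambda>m. 1 / real (Suc (\<sigma> m))) \<longlonglongrightarrow> 0"
  proof (rule tendsto_sandwich[of "\<lambda>_. 0" _ _ "\<lambda>m. 1 / real (Suc m)"])
    show "\<forall>\<^sub>F m in sequentially. 0 \<le> 1 / real (Suc (\<sigma> m))" by simp
    show "\<forall>\<^sub>F m in sequentially. 1 / real (Suc (\<sigma> m)) \<le> 1 / real (Suc m)" using inv by simp
    show "(\<lambda>m. 1 / real (Suc m)) \<longlonglongrightarrow> 0" using LIMSEQ_inverse_real_of_nat by (simp add: inverse_eq_divide)
    show "(\<lambda>m. 0::real) \<longlonglongrightarrow> 0" by simp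
  qed
  have near: "(\<lambda>m. pt (Suc (\<sigma> m)) (Rr m) a) \<longlonglongrightarrow> zs a"
    if a: "a \<in> I" and Rr: "\<And>m. \<forall>i<n. Q (\<sigma> m) i \<le> Rr m i \<and> Rr m i \<le> Q (\<sigma> m) i + 1" for Rr a
  proof -
    have e: "z (\<sigma> m) a \<le> pt (Suc (\<sigma> m)) (Rr m) a \<and>
             pt (Suc (\<sigma> m)) (Rr m) a \<le> z (\<sigma> m) a + 1 / real (Suc (\<sigma> m))" for m
    proof -
      have "Q (\<sigma> m) (bi a) \<le> Rr m (bi a) \<and> Rr m (bi a) \<le> Q (\<sigma> m) (bi a) + 1"
        using Rr bi_I[OF a] by auto
      then have "real (Q (\<sigma> m) (bi a)) \<le> real (Rr m (bi a)) \<and> real (Rr m (bi a)) \<le> real (Q (\<sigma> m) (bi a)) + 1"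
        by linarith
      then have "real (Q (\<sigma> m) (bi a)) / real (Suc (\<sigma> m)) \<le> real (Rr m (bi a)) / real (Suc (\<sigma> m)) \<and>
          real (Rr m (bi a)) / real (Suc (\<sigma> m)) \<le> real (Q (\<sigma> m) (bi a)) / real (Suc (\<sigma> m)) + 1 / real (Suc (\<sigma> m))"
        by (simp add: divide_right_mono add_divide_distrib[symmetric])
      then show ?thesis unfolding z_def pt_def using a by simp
    qed
    have "(\<lambda>m. z (\<sigma> m) a + 1 / real (Suc (\<sigma> m))) \<longlonglongrightarrow> zs a + 0"
      by (intro tendsto_add zs_lim[OF a] lim0)
    then have u: "(\<lambda>m. z (\<sigma> m) a + 1 / real (Suc (\<sigma> m))) \<longlonglongrightarrow> zs a" by simp
    show ?thesis
    proof (rule tendsto_sandwich[OF _ _ zs_lim[OF a] u])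
      show "\<forall>\<^sub>F m in sequentially. z (\<sigma> m) a \<le> pt (Suc (\<sigma> m)) (Rr m) a" using e by simp
      show "\<forall>\<^sub>F m in sequentially. pt (Suc (\<sigma> m)) (Rr m) a \<le> z (\<sigma> m) a + 1 / real (Suc (\<sigma> m))" using e by simp
    qed
  qed
  have fix_a: "f zs a = zs a" if a: "a \<in> I" for a
  proof -
    define j where "j = bi a"
    have j: "j < n" "b j = a" using bi_I[OF a] unfolding j_def by auto
    define Rr where "Rr m = R (\<sigma> m) j" for m
    define Ss where "Ss m = S (\<sigma> m) j" for m
    have Rr: "\<forall>i<n. Q (\<sigma> m) i \<le> Rr m i \<and> Rr m i \<le> Q (\<sigma> m) i + 1" for m
      using RS[OF j(1)] unfolding Rr_def by blast
    have Ss: "\<forall>i<n. Q (\<sigma> m) i \<le> Ss m i \<and> Ss m i \<le> Q (\<sigma> m) i + 1" for m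
      using RS[OF j(1)] unfolding Ss_def by blast
    have Rc: "pt (Suc (\<sigma> m)) (Rr m) \<in> cube I" for m
    proof (rule pt_cube)
      show "\<forall>j<n. Rr m j \<le> Suc (\<sigma> m)"
      proof (intro allI impI)
        fix j assume "j < n"
        then have "Rr m j \<le> Q (\<sigma> m) j + 1" "Q (\<sigma> m) j < Suc (\<sigma> m)" using Rr[of m] Q1[of "\<sigma> m"] by auto
        then show "Rr m j \<le> Suc (\<sigma> m)" by linarith
      qed
    qed simp
    have Sc: "pt (Suc (\<sigma> m)) (Ss m) \<in> cube I" for m
    proof (rule pt_cube)
      show "\<forall>j<n. Ss m j \<le> Suc (\<sigma> m)"
      proof (intro allI impI)
        fix j assume "j < n"
        then have "Ss m j \<le> Q (\<sigma> m) j + 1" "Q (\<sigma> m) j < Suc (\<sigma> m)" using Ss[of m] Q1[of "\<sigma> m"] by auto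
        then show "Ss m j \<le> Suc (\<sigma> m)" by linarith
      qed
    qed simp
    have fR: "(\<lambda>m. f (pt (Suc (\<sigma> m)) (Rr m)) a) \<longlonglongrightarrow> f zs a"
      by (rule cont[OF Rc zs_cube near[OF _ Rr] a])
    have fS: "(\<lambda>m. f (pt (Suc (\<sigma> m)) (Ss m)) a) \<longlonglongrightarrow> f zs a"
      by (rule cont[OF Sc zs_cube near[OF _ Ss] a])
    have "zs a \<le> f zs a"
      by (rule LIMSEQ_le[OF near[OF a Rr] fR]) (use RS[OF j(1)] j(2) in \<open>auto simp: Rr_def\<close>)
    moreover have "f zs a \<le> zs a"
      by (rule LIMSEQ_le[OF fS near[OF a Ss]]) (use RS[OF j(1)] j(2) in \<open>auto simp: Ss_def\<close>)
    ultimately show ?thesis by auto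
  qed
  have "f zs = zs"
  proof
    fix a show "f zs a = zs a"
    proof (cases "a \<in> I")
      case True then show ?thesis by (rule fix_a)
    next
      case False
      then show ?thesis using into[OF zs_cube] zs_cube unfolding cube_def by auto
    qed
  qed
  then show ?thesis using zs_cube by blast
qed



lemma int_cong_pmf:
  fixes f g :: "'a \<Rightarrow> real"
  assumes "\<And>x. x \<in> set_pmf M \<Longrightarrow> f x = g x"
  shows "(\<integral>x. f x \<partial>measure_pmf M) = (\<integral>x. g x \<partial>measure_pmf M)"
  by (rule integral_cong_AE) (use assms in \<open>auto simp: AE_measure_pmf_iff\<close>)

lemma integral_bind_fin:
  fixes F :: "'b \<Rightarrow> real"
  assumes fM: "finite (set_pmf M)" and fN: "\<And>y. y \<in> set_pmf M \<Longrightarrow> finite (set_pmf (N y))"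
  shows "(\<integral>x. F x \<partial>measure_pmf (bind_pmf M N)) = (\<integral>y. (\<integral>x. F x \<partial>measure_pmf (N y)) \<partial>measure_pmf M)"
proof -
  define S where "S = (\<Union>y\<in>set_pmf M. set_pmf (N y))"
  have fS: "finite S" unfolding S_def using fM fN by auto
  have "(\<integral>x. F x \<partial>measure_pmf (bind_pmf M N)) = (\<Sum>x\<in>S. F x * pmf (bind_pmf M N) x)"
    by (rule integral_measure_pmf_real[OF fS]) (auto simp: S_def)
  also have "\<dots> = (\<Sum>x\<in>S. F x * (\<Sum>y\<in>set_pmf M. pmf (N y) x * pmf M y))"
  proof (rule sum.cong[OF refl])
    fix x assume "x \<in> S"
    have "pmf (bind_pmf M N) x = (\<integral>y. pmf (N y) x \<partial>measure_pmf M)" by (rule pmf_bind)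
    also have "\<dots> = (\<Sum>y\<in>set_pmf M. pmf (N y) x * pmf M y)"
      by (rule integral_measure_pmf_real[OF fM]) auto
    finally show "F x * pmf (bind_pmf M N) x = F x * (\<Sum>y\<in>set_pmf M. pmf (N y) x * pmf M y)" by simp
  qed
  also have "\<dots> = (\<Sum>y\<in>set_pmf M. (\<Sum>x\<in>S. F x * pmf (N y) x) * pmf M y)"
  proof -
    have "(\<Sum>x\<in>S. F x * (\<Sum>y\<in>set_pmf M. pmf (N y) x * pmf M y)) =
          (\<Sum>x\<in>S. \<Sum>y\<in>set_pmf M. F x * pmf (N y) x * pmf M y)"
      by (simp add: sum_distrib_left mult.assoc)
    also have "\<dots> = (\<Sum>y\<in>set_pmf M. \<Sum>x\<in>S. F x * pmf (N y) x * pmf M y)"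
      by (rule sum.swap)
    also have "\<dots> = (\<Sum>y\<in>set_pmf M. (\<Sum>x\<in>S. F x * pmf (N y) x) * pmf M y)"
      by (simp add: sum_distrib_right)
    finally show ?thesis .
  qed
  also have "\<dots> = (\<Sum>y\<in>set_pmf M. (\<integral>x. F x \<partial>measure_pmf (N y)) * pmf M y)"
  proof (rule sum.cong[OF refl])
    fix y assume y: "y \<in> set_pmf M"
    have "(\<integral>x. F x \<partial>measure_pmf (N y)) = (\<Sum>x\<in>S. F x * pmf (N y) x)"
      by (rule integral_measure_pmf_real[OF fS]) (use y in \<open>auto simp: S_def\<close>)
    then show "(\<Sum>x\<in>S. F x * pmf (N y) x) * pmf M y = (\<integral>x. F x \<partial>measure_pmf (N y)) * pmf M y" by simp
  qed
  also have "\<dots> = (\<integral>y. (\<integral>x. F x \<partial>measure_pmf (N y)) \<partial>measure_pmf M)"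
    by (rule integral_measure_pmf_real[OF fM, symmetric]) auto
  finally show ?thesis .
qed

lemma integral_map_fin:
  fixes F :: "'b \<Rightarrow> real"
  shows "(\<integral>x. F x \<partial>measure_pmf (map_pmf f M)) = (\<integral>y. F (f y) \<partial>measure_pmf M)"
  by simp

lemma length_trace[simp]: "length (trace f t x s) = length s"
  by (induction s arbitrary: t x) (auto split: prod.splits)

lemma take_trace: "take n (trace f t x s) = trace f t x (take n s)"
proof (induction s arbitrary: t x n)
  case Nil then show ?case by simp
next
  case (Cons a s)
  then show ?case by (cases a; cases n) (auto split: prod.splits)
qed

lemma nth_trace:
  "j < length s \<Longrightarrow> \<exists>xj. trace f t x s ! j =
     (xj, fst (s ! j), fst (snd (f (t + j) xj (fst (s ! j)) (snd (s ! j)))),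
                      snd (snd (f (t + j) xj (fst (s ! j)) (snd (s ! j)))))"
proof (induction s arbitrary: t x j)
  case Nil then show ?case by simp
next
  case (Cons a s)
  obtain u w where a: "a = (u, w)" by (cases a)
  obtain x' y r where fx: "f t x u w = (x', y, r)" by (cases "f t x u w") auto
  show ?case
  proof (cases j)
    case 0 then show ?thesis using a fx by auto
  next
    case (Suc j')
    then have "j' < length s" using Cons.prems by simp
    from Cons.IH[OF this, of "Suc t" x'] obtain xj where
      "trace f (Suc t) x' s ! j' = (xj, fst (s ! j'), fst (snd (f (Suc t + j') xj (fst (s ! j')) (snd (s ! j')))),
                      snd (snd (f (Suc t + j') xj (fst (s ! j')) (snd (s ! j')))))" by blast
    then show ?thesis using a fx Suc by auto
  qed
qed

definition trunc :: "nat \<Rightarrow> ('p,'x,'u,'w,'h) outcome \<Rightarrow> ('p,'x,'u,'w,'h) outcome" where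
  "trunc m \<omega> = (fst \<omega>, fst (snd \<omega>), take m (snd (snd \<omega>)))"

definition olen :: "('p,'x,'u,'w,'h) outcome \<Rightarrow> nat" where
  "olen \<omega> = length (snd (snd \<omega>))"

lemma hist_trunc: "t \<le> m \<Longrightarrow> hist G i (trunc m \<omega>) t = hist G i \<omega> t"
proof -
  assume tm: "t \<le> m"
  obtain x h s where w: "\<omega> = (x, h, s)" by (cases \<omega>) auto
  have "take t (trace (dyn G) 0 x (take m s)) = take t (trace (dyn G) 0 x s)"
    by (simp add: take_trace min_absorb1 tm)
  then show ?thesis unfolding hist_def trunc_def traj_def w by simp
qed

lemma action_trunc: "t < m \<Longrightarrow> action (trunc m \<omega>) t i = action \<omega> t i"
  unfolding action_def trunc_def by simp

lemma olen_run: "\<omega> \<in> set_pmf (run G g t) \<Longrightarrow> olen \<omega> = t"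
  by (induction t arbitrary: \<omega>) (auto simp: olen_def)

lemma finite_olen: "finite {\<omega> :: ('p::finite,'x::finite,'u::finite,'w::finite,'h::finite) outcome. olen \<omega> = t}"
proof -
  have "{\<omega> :: ('p,'x,'u,'w,'h) outcome. olen \<omega> = t} \<subseteq> UNIV \<times> UNIV \<times> {s. set s \<subseteq> UNIV \<and> length s = t}"
    by (auto simp: olen_def)
  moreover have "finite (UNIV \<times> UNIV \<times> {s :: (('p \<Rightarrow> 'u) \<times> 'w) list. set s \<subseteq> UNIV \<and> length s = t} ::
       ('p,'x,'u,'w,'h) outcome set)"
    by (intro finite_cartesian_product finite_lists_length_eq) auto
  ultimately show ?thesis by (rule finite_subset)
qed

lemma finite_run:
  "finite (set_pmf (run (G :: ('p::finite,'x::finite,'u::finite,'y,'w::finite,'h::finite) game) g t))"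
  by (rule finite_subset[OF _ finite_olen[of t]]) (auto dest: olen_run)

lemma trunc_run: "map_pmf (trunc m) (run G g (m + d)) = run G g m"
proof (induction d)
  case 0
  have "map_pmf (trunc m) (run G g m) = run G g m"
    by (rule map_pmf_idI) (auto simp: trunc_def dest!: olen_run simp: olen_def)
  then show ?case by simp
next
  case (Suc d)
  have "map_pmf (trunc m) (run G g (m + Suc d)) =
     bind_pmf (run G g (m + d)) (\<lambda>\<omega>. map_pmf (trunc m)
       (bind_pmf (Pi_pmf UNIV undefined (\<lambda>i. g (m + d) i (hist G i \<omega> (m + d)))) (\<lambda>u.
         map_pmf (\<lambda>w. (fst \<omega>, fst (snd \<omega>), snd (snd \<omega>) @ [(u, w)])) (noise G (m + d)))))"
    by (simp add: map_bind_pmf)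
  also have "\<dots> = bind_pmf (run G g (m + d)) (\<lambda>\<omega>. return_pmf (trunc m \<omega>))"
  proof (rule bind_pmf_cong[OF refl])
    fix \<omega> assume "\<omega> \<in> set_pmf (run G g (m + d))"
    then have l: "length (snd (snd \<omega>)) = m + d" using olen_run[of \<omega>] by (simp add: olen_def)
    have "trunc m (fst \<omega>, fst (snd \<omega>), snd (snd \<omega>) @ [(u, w)]) = trunc m \<omega>" for u w
      using l by (simp add: trunc_def)
    then show "map_pmf (trunc m)
       (bind_pmf (Pi_pmf UNIV undefined (\<lambda>i. g (m + d) i (hist G i \<omega> (m + d)))) (\<lambda>u.
         map_pmf (\<lambda>w. (fst \<omega>, fst (snd \<omega>), snd (snd \<omega>) @ [(u, w)])) (noise G (m + d)))) =
       return_pmf (trunc m \<omega>)"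
      by (simp add: map_bind_pmf map_pmf_comp)
  qed
  also have "\<dots> = map_pmf (trunc m) (run G g (m + d))"
    by (simp add: map_pmf_def)
  also have "\<dots> = run G g m" by (rule Suc.IH)
  finally show ?case .
qed

lemma integral_run_trunc:
  fixes F :: "('p::finite,'x,'u,'w,'h) outcome \<Rightarrow> real"
  assumes "m \<le> n" and inv: "\<And>\<omega>. F (trunc m \<omega>) = F \<omega>"
  shows "(\<integral>\<omega>. F \<omega> \<partial>measure_pmf (run G g n)) = (\<integral>\<omega>. F \<omega> \<partial>measure_pmf (run G g m))"
proof -
  obtain d where n: "n = m + d" using assms(1) le_Suc_ex by blast
  have "(\<integral>\<omega>. F \<omega> \<partial>measure_pmf (run G g m)) = (\<integral>\<omega>. F \<omega> \<partial>measure_pmf (map_pmf (trunc m) (run G g n)))"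
    by (simp add: n trunc_run)
  also have "\<dots> = (\<integral>\<omega>. F (trunc m \<omega>) \<partial>measure_pmf (run G g n))" by simp
  also have "\<dots> = (\<integral>\<omega>. F \<omega> \<partial>measure_pmf (run G g n))" by (simp add: inv)
  finally show ?thesis by simp
qed



lemma int_sum_pmf:
  fixes f :: "'a \<Rightarrow> real"
  assumes "finite (set_pmf M)"
  shows "(\<integral>x. f x \<partial>measure_pmf M) = (\<Sum>x\<in>set_pmf M. f x * pmf M x)"
  by (rule integral_measure_pmf_real[OF assms]) auto

lemma prob_int: "measure_pmf.prob M A = (\<integral>x. indicator A x \<partial>measure_pmf M)"
  by simp

lemma run_Suc_ext:
  assumes "\<omega>' \<in> set_pmf (run G g (Suc t))"
  shows "\<exists>\<omega> u w. \<omega> \<in> set_pmf (run G g t) \<and> u \<in> set_pmf (Pi_pmf UNIV undefined (\<lambda>i. g t i (hist G i \<omega> t))) \<and>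
     \<omega>' = (fst \<omega>, fst (snd \<omega>), snd (snd \<omega>) @ [(u, w)])"
  using assms by auto

lemma finite_step:
  "finite (set_pmf (bind_pmf (Pi_pmf UNIV undefined (p :: 'p::finite \<Rightarrow> 'u::finite pmf)) (\<lambda>u.
         map_pmf (\<lambda>w::'w::finite. e u w) N)))"
proof -
  have "set_pmf (bind_pmf (Pi_pmf UNIV undefined p) (\<lambda>u. map_pmf (\<lambda>w. e u w) N)) \<subseteq> (\<lambda>(u,w). e u w) ` UNIV"
    by auto
  moreover have "finite ((\<lambda>(u,w). e u w) ` (UNIV :: (('p \<Rightarrow> 'u) \<times> 'w) set))" by simp
  ultimately show ?thesis by (rule finite_subset)
qed

lemma action_law:
  fixes G :: "('p::finite,'x::finite,'u::finite,'y,'w::finite,'h::finite) game"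
    and c :: "('h,'u,'y) hist \<Rightarrow> real"
  assumes "t < n"
  shows "(\<integral>\<omega>. c (hist G i \<omega> t) * indicator {\<omega>. action \<omega> t i = u} \<omega> \<partial>measure_pmf (run G g n)) =
         (\<integral>\<omega>. c (hist G i \<omega> t) * pmf (g t i (hist G i \<omega> t)) u \<partial>measure_pmf (run G g n))"
proof -
  define F where "F \<omega> = c (hist G i \<omega> t) * indicator {\<omega>. action \<omega> t i = u} \<omega>" for \<omega>
  define H where "H \<omega> = c (hist G i \<omega> t) * pmf (g t i (hist G i \<omega> t)) u" for \<omega>
  have "(\<integral>\<omega>. F \<omega> \<partial>measure_pmf (run G g n)) = (\<integral>\<omega>. F \<omega> \<partial>measure_pmf (run G g (Suc t)))"
    by (rule integral_run_trunc) (use assms in \<open>auto simp: F_def hist_trunc action_trunc indicator_def\<close>)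
  also have "\<dots> = (\<integral>\<omega>. H \<omega> \<partial>measure_pmf (run G g t))"
  proof -
    have "(\<integral>\<omega>. F \<omega> \<partial>measure_pmf (run G g (Suc t))) =
      (\<integral>\<omega>. (\<integral>\<omega>'. F \<omega>' \<partial>measure_pmf (bind_pmf (Pi_pmf UNIV undefined (\<lambda>i. g t i (hist G i \<omega> t))) (\<lambda>u.
         map_pmf (\<lambda>w. (fst \<omega>, fst (snd \<omega>), snd (snd \<omega>) @ [(u, w)])) (noise G t)))) \<partial>measure_pmf (run G g t))"
      by (simp only: run.simps, rule integral_bind_fin[OF finite_run finite_step])
    also have "\<dots> = (\<integral>\<omega>. H \<omega> \<partial>measure_pmf (run G g t))"
    proof (rule int_cong_pmf)
      fix \<omega> assume \<omega>: "\<omega> \<in> set_pmf (run G g t)"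
      then have l: "length (snd (snd \<omega>)) = t" using olen_run[OF \<omega>] by (simp add: olen_def)
      define p where "p = (\<lambda>i. g t i (hist G i \<omega> t))"
      have ext: "F (fst \<omega>, fst (snd \<omega>), snd (snd \<omega>) @ [(v, w)]) = c (hist G i \<omega> t) * indicator {v. v i = u} v" for v w
      proof -
        have "trunc t (fst \<omega>, fst (snd \<omega>), snd (snd \<omega>) @ [(v, w)]) = \<omega>"
          using l by (simp add: trunc_def)
        then have "hist G i (fst \<omega>, fst (snd \<omega>), snd (snd \<omega>) @ [(v, w)]) t = hist G i \<omega> t"
          using hist_trunc[of t t G i "(fst \<omega>, fst (snd \<omega>), snd (snd \<omega>) @ [(v, w)])"] by simp
        moreover have "action (fst \<omega>, fst (snd \<omega>), snd (snd \<omega>) @ [(v, w)]) t i = v i"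
          using l by (simp add: action_def nth_append)
        ultimately show ?thesis by (simp add: F_def indicator_def)
      qed
      have "(\<integral>\<omega>'. F \<omega>' \<partial>measure_pmf (bind_pmf (Pi_pmf UNIV undefined p) (\<lambda>v.
         map_pmf (\<lambda>w. (fst \<omega>, fst (snd \<omega>), snd (snd \<omega>) @ [(v, w)])) (noise G t)))) =
         (\<integral>v. (\<integral>\<omega>'. F \<omega>' \<partial>measure_pmf (map_pmf (\<lambda>w. (fst \<omega>, fst (snd \<omega>), snd (snd \<omega>) @ [(v, w)])) (noise G t)))
            \<partial>measure_pmf (Pi_pmf UNIV undefined p))"
        by (rule integral_bind_fin) (simp_all add: finite)
      also have "\<dots> = (\<integral>v. c (hist G i \<omega> t) * indicator {v. v i = u} v \<partial>measure_pmf (Pi_pmf UNIV undefined p))"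
        by (simp add: ext)
      also have "\<dots> = c (hist G i \<omega> t) * (\<integral>v. indicator {v. v i = u} v \<partial>measure_pmf (Pi_pmf UNIV undefined p))"
        by simp
      also have "(\<integral>v. indicator {v. v i = u} v \<partial>measure_pmf (Pi_pmf UNIV undefined p)) =
                 measure_pmf.prob (Pi_pmf UNIV undefined p) {v. v i = u}"
        by simp
      also have "\<dots> = measure_pmf.prob (map_pmf (\<lambda>f. f i) (Pi_pmf UNIV undefined p)) {u}"
        by (simp add: vimage_def)
      also have "\<dots> = measure_pmf.prob (p i) {u}"
        by (subst Pi_pmf_component) auto
      also have "\<dots> = pmf (p i) u" by (simp add: measure_pmf_single)
      finally show "(\<integral>\<omega>'. F \<omega>' \<partial>measure_pmf (bind_pmf (Pi_pmf UNIV undefined (\<lambda>i. g t i (hist G i \<omega> t))) (\<lambda>u.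
         map_pmf (\<lambda>w. (fst \<omega>, fst (snd \<omega>), snd (snd \<omega>) @ [(u, w)])) (noise G t)))) = H \<omega>"
        by (simp add: H_def p_def)
    qed
    finally show ?thesis .
  qed
  also have "\<dots> = (\<integral>\<omega>. H \<omega> \<partial>measure_pmf (run G g n))"
    by (rule integral_run_trunc[symmetric]) (use assms in \<open>auto simp: H_def hist_trunc\<close>)
  finally show ?thesis by (simp add: F_def H_def)
qed



definition cA :: "('h,'u,'y) hist \<Rightarrow> 'u \<Rightarrow> ('h,'u,'y) hist \<Rightarrow> bool" where
  "cA h u h'' \<longleftrightarrow> fst h'' = fst h \<and> snd h'' \<noteq> [] \<and> butlast (snd h'') = snd h \<and> fst (last (snd h'')) = u"

lemma hist_Suc:
  assumes "t < olen \<omega>"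
  shows "\<exists>yy. hist G i \<omega> (Suc t) = (fst (hist G i \<omega> t), snd (hist G i \<omega> t) @ [(action \<omega> t i, yy)])"
proof -
  obtain x h s where w: "\<omega> = (x, h, s)" by (cases \<omega>) auto
  have lt: "t < length s" using assms w by (simp add: olen_def)
  have lt': "t < length (trace (dyn G) 0 x s)" using lt by simp
  obtain xj where nt: "trace (dyn G) 0 x s ! t = (xj, fst (s ! t), fst (snd (dyn G (0 + t) xj (fst (s ! t)) (snd (s ! t)))),
                      snd (snd (dyn G (0 + t) xj (fst (s ! t)) (snd (s ! t)))))"
    using nth_trace[OF lt, of "dyn G" 0 x] by blast
  have "take (Suc t) (trace (dyn G) 0 x s) = take t (trace (dyn G) 0 x s) @ [trace (dyn G) 0 x s ! t]"
    by (rule take_Suc_conv_app_nth[OF lt'])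
  then have "map (\<lambda>(x, u, y, r). (u i, y i)) (take (Suc t) (trace (dyn G) 0 x s)) =
     map (\<lambda>(x, u, y, r). (u i, y i)) (take t (trace (dyn G) 0 x s)) @
       [(fst (s ! t) i, fst (snd (dyn G t xj (fst (s ! t)) (snd (s ! t)))) i)]"
    using nt by (simp add: case_prod_beta)
  then show ?thesis unfolding hist_def traj_def w action_def by simp
qed

lemma hu_iff_cA:
  assumes "t < olen \<omega>"
  shows "(hist G i \<omega> t = h \<and> action \<omega> t i = u) \<longleftrightarrow> cA h u (hist G i \<omega> (Suc t))"
proof -
  obtain yy where e: "hist G i \<omega> (Suc t) = (fst (hist G i \<omega> t), snd (hist G i \<omega> t) @ [(action \<omega> t i, yy)])"
    using hist_Suc[OF assms, of G i] by blast
  show ?thesis unfolding cA_def e by (cases "hist G i \<omega> t") auto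
qed

lemma support_acts:
  assumes "valid_profile G g" "\<omega> \<in> set_pmf (run G g t)" "t \<le> horizon G" "j < t"
  shows "fst (snd (snd \<omega>) ! j) k \<in> acts G j k"
  using assms(2-4)
proof (induction t arbitrary: \<omega>)
  case 0 then show ?case by simp
next
  case (Suc t)
  from Suc.prems(1) obtain \<omega>0 u w where
    w0: "\<omega>0 \<in> set_pmf (run G g t)" and
    u: "u \<in> set_pmf (Pi_pmf UNIV undefined (\<lambda>i. g t i (hist G i \<omega>0 t)))" and
    e: "\<omega> = (fst \<omega>0, fst (snd \<omega>0), snd (snd \<omega>0) @ [(u, w)])"
    by auto
  have l: "length (snd (snd \<omega>0)) = t" using olen_run[OF w0] by (simp add: olen_def)
  show ?case
  proof (cases "j < t")
    case True
    then show ?thesis using Suc.IH[OF w0] Suc.prems l e by (simp add: nth_append)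
  next
    case False
    then have j: "j = t" using Suc.prems by simp
    have "u k \<in> set_pmf (g t k (hist G k \<omega>0 t))"
      using u by (simp add: set_Pi_pmf PiE_dflt_def)
    moreover have tl: "t < horizon G" using Suc.prems(2) by simp
    moreover have "set_pmf (g t k (hist G k \<omega>0 t)) \<subseteq> acts G t k"
      using assms(1) tl unfolding valid_profile_def by blast
    ultimately show ?thesis using e l j by (auto simp: nth_append)
  qed
qed

lemma reward_bound:
  assumes wf: "wf_game G" and v: "valid_profile G g" and w: "\<omega> \<in> set_pmf (play G g)" and t: "t < horizon G"
  shows "\<bar>reward G i \<omega> t\<bar> \<le> 1"
proof -
  obtain x h s where we: "\<omega> = (x, h, s)" by (cases \<omega>) auto
  have l: "length s = horizon G" using olen_run[of \<omega>] w we by (simp add: play_def olen_def)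
  have lt: "t < length s" using l t by simp
  obtain xj where nt: "trace (dyn G) 0 x s ! t = (xj, fst (s ! t), fst (snd (dyn G (0 + t) xj (fst (s ! t)) (snd (s ! t)))),
                      snd (snd (dyn G (0 + t) xj (fst (s ! t)) (snd (s ! t)))))"
    using nth_trace[OF lt, of "dyn G" 0 x] by blast
  have acts: "fst (s ! t) k \<in> acts G t k" for k
    using support_acts[OF v, of \<omega> "horizon G" t] w t we by (auto simp: play_def)
  have "reward G i \<omega> t = snd (snd (dyn G t xj (fst (s ! t)) (snd (s ! t)))) i"
    unfolding reward_def traj_def we using nt by (simp add: case_prod_beta)
  moreover have "-1 \<le> snd (snd (dyn G t xj (fst (s ! t)) (snd (s ! t)))) i \<and> snd (snd (dyn G t xj (fst (s ! t)) (snd (s ! t)))) i \<le> 1"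
    using wf[unfolded wf_game_def, THEN conjunct2, rule_format, OF t acts] unfolding Let_def .
  ultimately show ?thesis by auto
qed

lemma W_bound:
  assumes wf: "wf_game G" and v: "valid_profile G g" and w: "\<omega> \<in> set_pmf (play G g)"
  shows "\<bar>\<Sum>t\<in>{\<tau>..<horizon G}. reward G i \<omega> t\<bar> \<le> real (horizon G)"
proof -
  have "\<bar>\<Sum>t\<in>{\<tau>..<horizon G}. reward G i \<omega> t\<bar> \<le> (\<Sum>t\<in>{\<tau>..<horizon G}. \<bar>reward G i \<omega> t\<bar>)"
    by (rule sum_abs)
  also have "\<dots> \<le> (\<Sum>t\<in>{\<tau>..<horizon G}. 1)"
    by (rule sum_mono) (use reward_bound[OF wf v w] in auto)
  also have "\<dots> \<le> real (horizon G)" by simp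
  finally show ?thesis .
qed

lemma finite_play: "finite (set_pmf (play (G :: ('p::finite,'x::finite,'u::finite,'y,'w::finite,'h::finite) game) g))"
  unfolding play_def by (rule finite_run)

lemma prob_sum_pmf:
  assumes "finite (set_pmf M)"
  shows "measure_pmf.prob M A = (\<Sum>x\<in>set_pmf M. indicator A x * pmf M x)"
  unfolding prob_int by (rule int_sum_pmf[OF assms])

lemma cond_exp_bound:
  fixes G :: "('p::finite,'x::finite,'u::finite,'y,'w::finite,'h::finite) game"
  assumes "\<And>\<omega>. \<omega> \<in> set_pmf (play G g) \<Longrightarrow> \<bar>X \<omega>\<bar> \<le> B" and "measure_pmf.prob (play G g) A > 0"
  shows "\<bar>cond_exp (play G g) A X\<bar> \<le> B"
proof -
  let ?M = "play G g"
  have "\<bar>\<integral>\<omega>. indicator A \<omega> * X \<omega> \<partial>measure_pmf ?M\<bar> = \<bar>\<Sum>\<omega>\<in>set_pmf ?M. indicator A \<omega> * X \<omega> * pmf ?M \<omega>\<bar>"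
    by (simp add: int_sum_pmf[OF finite_play])
  also have "\<dots> \<le> (\<Sum>\<omega>\<in>set_pmf ?M. \<bar>indicator A \<omega> * X \<omega> * pmf ?M \<omega>\<bar>)" by (rule sum_abs)
  also have "\<dots> \<le> (\<Sum>\<omega>\<in>set_pmf ?M. B * (indicator A \<omega> * pmf ?M \<omega>))"
  proof (rule sum_mono)
    fix \<omega> assume "\<omega> \<in> set_pmf ?M"
    then have "\<bar>X \<omega>\<bar> \<le> B" by (rule assms(1))
    then show "\<bar>indicator A \<omega> * X \<omega> * pmf ?M \<omega>\<bar> \<le> B * (indicator A \<omega> * pmf ?M \<omega>)"
      by (auto simp: abs_mult indicator_def intro!: mult_right_mono)
  qed
  also have "\<dots> = B * measure_pmf.prob ?M A"
    by (simp only: prob_sum_pmf[OF finite_play] sum_distrib_left mult.assoc)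
  finally have "\<bar>\<integral>\<omega>. indicator A \<omega> * X \<omega> \<partial>measure_pmf ?M\<bar> \<le> B * measure_pmf.prob ?M A" .
  moreover have "\<bar>cond_exp ?M A X\<bar> = \<bar>\<integral>\<omega>. indicator A \<omega> * X \<omega> \<partial>measure_pmf ?M\<bar> / measure_pmf.prob ?M A"
    unfolding cond_exp_def using assms(2) by (simp add: abs_divide)
  ultimately show ?thesis using assms(2) by (simp add: pos_divide_le_eq)
qed



lemma sum_if_eq_finite: "(\<Sum>x\<in>(UNIV::'a::finite set). (if x = a then f x else 0)) = (f a :: real)"
  by (simp add: sum.delta)

lemma cond_exp_mult:
  assumes "measure_pmf.prob M A > 0"
  shows "(\<integral>\<omega>. indicator A \<omega> * X \<omega> \<partial>measure_pmf M) = measure_pmf.prob M A * cond_exp M A X"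
  using assms unfolding cond_exp_def by simp

lemma msi_values:
  fixes G :: "('p::finite,'x::finite,'u::finite,'y,'w::finite,'h::finite) game"
    and io1 :: "'p \<Rightarrow> 'h \<Rightarrow> 'k::finite" and io :: "nat \<Rightarrow> 'p \<Rightarrow> 'k \<Rightarrow> ('u \<times> 'y) \<Rightarrow> 'k"
    and \<rho> :: "nat \<Rightarrow> 'p \<Rightarrow> 'k \<Rightarrow> 'u pmf"
  assumes valid: "valid_kstrat G \<rho>" and info: "info_state G io1 io i (kbased io1 io \<rho>)"
  shows "\<exists>v. \<forall>\<tau><horizon G. \<forall>h u. measure_pmf.prob (play G (kbased io1 io \<rho>)) (hu_event G \<tau> i h u) > 0 \<longrightarrow>
     cond_exp (play G (kbased io1 io \<rho>)) (hu_event G \<tau> i h u) (\<lambda>\<omega>. \<Sum>t\<in>{\<tau>..<horizon G}. reward G i \<omega> t)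
       = v \<tau> (compress io1 io i h) u"
proof -
  define g where "g = kbased io1 io \<rho>"
  define M where "M = play G g"
  define T where "T = horizon G"
  define A where "A t h u = hu_event G t i h u" for t h u
  define W where "W \<tau> \<omega> = (\<Sum>t\<in>{\<tau>..<T}. reward G i \<omega> t)" for \<tau> \<omega>
  define cp where "cp h = compress io1 io i h" for h
  have fin: "finite (set_pmf M)" unfolding M_def by (rule finite_play)
  have olenM: "olen \<omega> = T" if "\<omega> \<in> set_pmf M" for \<omega>
    using that unfolding M_def play_def T_def by (rule olen_run)
  have intg: "integrable (measure_pmf M) f" for f :: "_ \<Rightarrow> real"
    by (rule integrable_measure_pmf_finite[OF fin])
  have gvalid: "\<And>t h. t < horizon G \<Longrightarrow> set_pmf ((\<lambda>t. g t i) t h) \<subseteq> acts G t i"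
    using valid unfolding valid_kstrat_def g_def kbased_def by auto
  have upd: "upd_player g i (\<lambda>t. g t i) = g"
    by (auto simp: upd_player_def fun_eq_iff)
  obtain P :: "nat \<Rightarrow> 'k \<Rightarrow> 'u \<Rightarrow> 'k pmf" and r :: "nat \<Rightarrow> 'k \<Rightarrow> 'u \<Rightarrow> real" where
    PR: "\<forall>gi. (\<forall>t<horizon G. \<forall>h. set_pmf (gi t h) \<subseteq> acts G t i) \<longrightarrow>
          (let M = play G (upd_player g i gi) in
           \<forall>t<horizon G. \<forall>h u. measure_pmf.prob M (hu_event G t i h u) > 0 \<longrightarrow>
             (Suc t < horizon G \<longrightarrow> (\<forall>k'.
                cond_exp M (hu_event G t i h u)
                  (\<lambda>\<omega>. indicator {\<omega>. compress io1 io i (hist G i \<omega> (Suc t)) = k'} \<omega>)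
                = pmf (P t (compress io1 io i h) u) k')) \<and>
             cond_exp M (hu_event G t i h u) (\<lambda>\<omega>. reward G i \<omega> t)
                = r t (compress io1 io i h) u)"
    using info unfolding info_state_def g_def by blast
  have IP: "\<And>t h u. t < T \<Longrightarrow> measure_pmf.prob M (A t h u) > 0 \<Longrightarrow>
             (Suc t < T \<longrightarrow> (\<forall>k'.
                cond_exp M (A t h u) (\<lambda>\<omega>. indicator {\<omega>. cp (hist G i \<omega> (Suc t)) = k'} \<omega>)
                = pmf (P t (cp h) u) k')) \<and>
             cond_exp M (A t h u) (\<lambda>\<omega>. reward G i \<omega> t) = r t (cp h) u"
    using PR[rule_format, of "\<lambda>t. g t i", OF gvalid] unfolding upd Let_def M_def[symmetric] T_def A_def cp_def by blast
  have memA: "(\<omega> \<in> A \<tau> h u) = cA h u (hist G i \<omega> (Suc \<tau>))" if "\<omega> \<in> set_pmf M" "\<tau> < T" for \<omega> \<tau> h u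
    using hu_iff_cA[of \<tau> \<omega> G i h u] olenM[OF that(1)] that(2) unfolding A_def hu_event_def by simp
  have Wsplit: "W \<tau> \<omega> = reward G i \<omega> \<tau> + W (Suc \<tau>) \<omega>" if "\<tau> < T" for \<tau> \<omega>
    unfolding W_def using that by (simp add: sum.atLeast_Suc_lessThan)
  have step: "\<exists>w. \<forall>h u. measure_pmf.prob M (A \<tau> h u) > 0 \<longrightarrow> cond_exp M (A \<tau> h u) (W \<tau>) = w (cp h) u"
    if \<tau>T: "Suc \<tau> < T" and IH: "\<forall>h u. measure_pmf.prob M (A (Suc \<tau>) h u) > 0 \<longrightarrow>
        cond_exp M (A (Suc \<tau>) h u) (W (Suc \<tau>)) = w' (cp h) u" for \<tau> w'
  proof (intro exI allI impI)
    fix h u assume pos: "measure_pmf.prob M (A \<tau> h u) > 0"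
    define k where "k = cp h"
    define \<Phi> where "\<Phi> \<omega> = w' (cp (hist G i \<omega> (Suc \<tau>))) (action \<omega> (Suc \<tau>) i)" for \<omega>
    define key where "key \<omega> = (hist G i \<omega> (Suc \<tau>), action \<omega> (Suc \<tau>) i)" for \<omega>
    define \<Omega> where "\<Omega> = set_pmf M"
    define pA where "pA = measure_pmf.prob M (A \<tau> h u)"
    have \<tau>T': "\<tau> < T" using \<tau>T by simp
    
    have stepa: "(\<integral>\<omega>. indicator (A \<tau> h u) \<omega> * W (Suc \<tau>) \<omega> \<partial>measure_pmf M) =
                 (\<integral>\<omega>. indicator (A \<tau> h u) \<omega> * \<Phi> \<omega> \<partial>measure_pmf M)"
    proof -
      have grp: "(\<Sum>\<omega>\<in>{x\<in>\<Omega>. key x = a}. indicator (A \<tau> h u) \<omega> * W (Suc \<tau>) \<omega> * pmf M \<omega>) =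
                 (\<Sum>\<omega>\<in>{x\<in>\<Omega>. key x = a}. indicator (A \<tau> h u) \<omega> * \<Phi> \<omega> * pmf M \<omega>)"
        if a: "a \<in> key ` \<Omega>" for a
      proof -
        obtain \<omega>0 where \<omega>0: "\<omega>0 \<in> \<Omega>" "key \<omega>0 = a" using a by blast
        obtain h' u' where a': "a = (h', u')" by (cases a)
        define A' where "A' = A (Suc \<tau>) h' u'"
        have grpA': "{x\<in>\<Omega>. key x = a} = {x\<in>\<Omega>. x \<in> A'}"
          unfolding A'_def A_def hu_event_def key_def a' by auto
        have posA': "measure_pmf.prob M A' > 0"
          using \<omega>0 unfolding A'_def A_def hu_event_def \<Omega>_def key_def a'
          by (intro measure_pmf_posI[of \<omega>0]) auto
        define cc where "cc = (if cA h u h' then 1 else (0::real))"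
        have indc: "indicator (A \<tau> h u) \<omega> = cc" if "\<omega> \<in> {x\<in>\<Omega>. key x = a}" for \<omega>
          using that memA[of \<omega> \<tau> h u] \<tau>T' unfolding cc_def \<Omega>_def key_def a' by (auto simp: indicator_def)
        have phic: "\<Phi> \<omega> = w' (cp h') u'" if "\<omega> \<in> {x\<in>\<Omega>. key x = a}" for \<omega>
          using that unfolding \<Phi>_def key_def a' by auto
        have s1: "(\<Sum>\<omega>\<in>{x\<in>\<Omega>. key x = a}. W (Suc \<tau>) \<omega> * pmf M \<omega>) =
                  (\<integral>\<omega>. indicator A' \<omega> * W (Suc \<tau>) \<omega> \<partial>measure_pmf M)"
        proof -
          have "(\<integral>\<omega>. indicator A' \<omega> * W (Suc \<tau>) \<omega> \<partial>measure_pmf M) =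
                (\<Sum>\<omega>\<in>\<Omega>. indicator A' \<omega> * W (Suc \<tau>) \<omega> * pmf M \<omega>)"
            unfolding \<Omega>_def by (rule int_sum_pmf[OF fin])
          also have "\<dots> = (\<Sum>\<omega>\<in>\<Omega>. if \<omega> \<in> A' then W (Suc \<tau>) \<omega> * pmf M \<omega> else 0)"
            by (rule sum.cong) (auto simp: indicator_def)
          also have "\<dots> = (\<Sum>\<omega>\<in>{x\<in>\<Omega>. x \<in> A'}. W (Suc \<tau>) \<omega> * pmf M \<omega>)"
            by (rule sum.inter_filter[symmetric]) (use fin in \<open>simp add: \<Omega>_def\<close>)
          finally show ?thesis using grpA' by simp
        qed
        have s2: "(\<Sum>\<omega>\<in>{x\<in>\<Omega>. key x = a}. pmf M \<omega>) = measure_pmf.prob M A'"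
        proof -
          have "measure_pmf.prob M A' = (\<Sum>\<omega>\<in>\<Omega>. indicator A' \<omega> * pmf M \<omega>)"
            unfolding \<Omega>_def by (rule prob_sum_pmf[OF fin])
          also have "\<dots> = (\<Sum>\<omega>\<in>\<Omega>. if \<omega> \<in> A' then pmf M \<omega> else 0)"
            by (rule sum.cong) (auto simp: indicator_def)
          also have "\<dots> = (\<Sum>\<omega>\<in>{x\<in>\<Omega>. x \<in> A'}. pmf M \<omega>)"
            by (rule sum.inter_filter[symmetric]) (use fin in \<open>simp add: \<Omega>_def\<close>)
          finally show ?thesis using grpA' by simp
        qed
        have cexp: "cond_exp M A' (W (Suc \<tau>)) = w' (cp h') u'"
          using IH posA' unfolding A'_def by blast
        have "(\<Sum>\<omega>\<in>{x\<in>\<Omega>. key x = a}. indicator (A \<tau> h u) \<omega> * W (Suc \<tau>) \<omega> * pmf M \<omega>) =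
              (\<Sum>\<omega>\<in>{x\<in>\<Omega>. key x = a}. cc * (W (Suc \<tau>) \<omega> * pmf M \<omega>))"
          by (rule sum.cong[OF refl]) (simp add: indc)
        also have "\<dots> = cc * (\<integral>\<omega>. indicator A' \<omega> * W (Suc \<tau>) \<omega> \<partial>measure_pmf M)"
          by (simp add: sum_distrib_left[symmetric] s1)
        also have "\<dots> = cc * (measure_pmf.prob M A' * w' (cp h') u')"
          by (simp add: cond_exp_mult[OF posA'] cexp)
        also have "\<dots> = (\<Sum>\<omega>\<in>{x\<in>\<Omega>. key x = a}. cc * w' (cp h') u' * pmf M \<omega>)"
          by (simp add: sum_distrib_left[symmetric] s2)
        also have "\<dots> = (\<Sum>\<omega>\<in>{x\<in>\<Omega>. key x = a}. indicator (A \<tau> h u) \<omega> * \<Phi> \<omega> * pmf M \<omega>)"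
          by (rule sum.cong[OF refl]) (simp add: indc phic)
        finally show ?thesis .
      qed
      have finO: "finite \<Omega>" using fin by (simp add: \<Omega>_def)
      have "(\<integral>\<omega>. indicator (A \<tau> h u) \<omega> * W (Suc \<tau>) \<omega> \<partial>measure_pmf M) =
            (\<Sum>\<omega>\<in>\<Omega>. indicator (A \<tau> h u) \<omega> * W (Suc \<tau>) \<omega> * pmf M \<omega>)"
        unfolding \<Omega>_def by (rule int_sum_pmf[OF fin])
      also have "\<dots> = (\<Sum>a\<in>key ` \<Omega>. \<Sum>\<omega>\<in>{x\<in>\<Omega>. key x = a}. indicator (A \<tau> h u) \<omega> * W (Suc \<tau>) \<omega> * pmf M \<omega>)"
        by (rule sum.image_gen[OF finO])
      also have "\<dots> = (\<Sum>a\<in>key ` \<Omega>. \<Sum>\<omega>\<in>{x\<in>\<Omega>. key x = a}. indicator (A \<tau> h u) \<omega> * \<Phi> \<omega> * pmf M \<omega>)"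
        by (rule sum.cong[OF refl]) (rule grp)
      also have "\<dots> = (\<Sum>\<omega>\<in>\<Omega>. indicator (A \<tau> h u) \<omega> * \<Phi> \<omega> * pmf M \<omega>)"
        by (rule sum.image_gen[OF finO, symmetric])
      also have "\<dots> = (\<integral>\<omega>. indicator (A \<tau> h u) \<omega> * \<Phi> \<omega> \<partial>measure_pmf M)"
        unfolding \<Omega>_def by (rule int_sum_pmf[OF fin, symmetric])
      finally show ?thesis .
    qed
    
    have stepc: "(\<integral>\<omega>. indicator (A \<tau> h u) \<omega> * (if k' = cp (hist G i \<omega> (Suc \<tau>)) then 1 else 0) *
                     (if u' = action \<omega> (Suc \<tau>) i then 1 else 0) \<partial>measure_pmf M) =
                 pmf (\<rho> (Suc \<tau>) i k') u' * (pA * pmf (P \<tau> k u) k')" for k' u'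
    proof -
      define c0 where "c0 h'' = (if cA h u h'' \<and> cp h'' = k' then 1 else (0::real))" for h''
      have "(\<integral>\<omega>. indicator (A \<tau> h u) \<omega> * (if k' = cp (hist G i \<omega> (Suc \<tau>)) then 1 else 0) *
                     (if u' = action \<omega> (Suc \<tau>) i then 1 else 0) \<partial>measure_pmf M) =
            (\<integral>\<omega>. c0 (hist G i \<omega> (Suc \<tau>)) * indicator {\<omega>. action \<omega> (Suc \<tau>) i = u'} \<omega> \<partial>measure_pmf M)"
        by (rule int_cong_pmf) (auto simp: c0_def memA[OF _ \<tau>T'] indicator_def)
      also have "\<dots> = (\<integral>\<omega>. c0 (hist G i \<omega> (Suc \<tau>)) * pmf (g (Suc \<tau>) i (hist G i \<omega> (Suc \<tau>))) u' \<partial>measure_pmf M)"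
        unfolding M_def play_def by (rule action_law) (use \<tau>T in \<open>simp add: T_def\<close>)
      also have "\<dots> = (\<integral>\<omega>. c0 (hist G i \<omega> (Suc \<tau>)) * pmf (\<rho> (Suc \<tau>) i k') u' \<partial>measure_pmf M)"
        by (rule int_cong_pmf) (auto simp: c0_def g_def kbased_def cp_def)
      also have "\<dots> = (\<integral>\<omega>. c0 (hist G i \<omega> (Suc \<tau>)) \<partial>measure_pmf M) * pmf (\<rho> (Suc \<tau>) i k') u'"
        by simp
      also have "(\<integral>\<omega>. c0 (hist G i \<omega> (Suc \<tau>)) \<partial>measure_pmf M) =
                 (\<integral>\<omega>. indicator (A \<tau> h u) \<omega> * indicator {\<omega>. cp (hist G i \<omega> (Suc \<tau>)) = k'} \<omega> \<partial>measure_pmf M)"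
        by (rule int_cong_pmf) (auto simp: c0_def memA[OF _ \<tau>T'] indicator_def)
      also have "\<dots> = pA * pmf (P \<tau> k u) k'"
        using IP[OF \<tau>T' pos] \<tau>T unfolding pA_def k_def by (simp add: cond_exp_mult[OF pos])
      finally show ?thesis by simp
    qed
    
    have ptw: "indicator (A \<tau> h u) \<omega> * \<Phi> \<omega> =
       (\<Sum>k'\<in>UNIV. \<Sum>u'\<in>UNIV. w' k' u' * (indicator (A \<tau> h u) \<omega> * (if k' = cp (hist G i \<omega> (Suc \<tau>)) then 1 else 0) *
                     (if u' = action \<omega> (Suc \<tau>) i then 1 else 0)))" for \<omega>
    proof -
      have "(\<Sum>u'\<in>UNIV. w' k' u' * (indicator (A \<tau> h u) \<omega> * (if k' = cp (hist G i \<omega> (Suc \<tau>)) then 1 else 0) *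
                     (if u' = action \<omega> (Suc \<tau>) i then 1 else 0))) =
            (if k' = cp (hist G i \<omega> (Suc \<tau>)) then w' k' (action \<omega> (Suc \<tau>) i) * indicator (A \<tau> h u) \<omega> else 0)" for k'
      proof -
        have "(\<Sum>u'\<in>UNIV. w' k' u' * (indicator (A \<tau> h u) \<omega> * (if k' = cp (hist G i \<omega> (Suc \<tau>)) then 1 else 0) *
                     (if u' = action \<omega> (Suc \<tau>) i then 1 else 0))) =
              (\<Sum>u'\<in>UNIV. if u' = action \<omega> (Suc \<tau>) i then w' k' u' * (indicator (A \<tau> h u) \<omega> * (if k' = cp (hist G i \<omega> (Suc \<tau>)) then 1 else 0)) else 0)"
          by (rule sum.cong) auto
        also have "\<dots> = w' k' (action \<omega> (Suc \<tau>) i) * (indicator (A \<tau> h u) \<omega> * (if k' = cp (hist G i \<omega> (Suc \<tau>)) then 1 else 0))"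
          by (rule sum_if_eq_finite)
        finally show ?thesis by simp
      qed
      then have "(\<Sum>k'\<in>UNIV. \<Sum>u'\<in>UNIV. w' k' u' * (indicator (A \<tau> h u) \<omega> * (if k' = cp (hist G i \<omega> (Suc \<tau>)) then 1 else 0) *
                     (if u' = action \<omega> (Suc \<tau>) i then 1 else 0))) =
          (\<Sum>k'\<in>UNIV. if k' = cp (hist G i \<omega> (Suc \<tau>)) then w' k' (action \<omega> (Suc \<tau>) i) * indicator (A \<tau> h u) \<omega> else 0)"
        by simp
      also have "\<dots> = w' (cp (hist G i \<omega> (Suc \<tau>))) (action \<omega> (Suc \<tau>) i) * indicator (A \<tau> h u) \<omega>"
        by (rule sum_if_eq_finite)
      finally show ?thesis unfolding \<Phi>_def by simp
    qed
    have stepb: "(\<integral>\<omega>. indicator (A \<tau> h u) \<omega> * \<Phi> \<omega> \<partial>measure_pmf M) =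
       (\<Sum>k'\<in>UNIV. \<Sum>u'\<in>UNIV. w' k' u' * (pmf (\<rho> (Suc \<tau>) i k') u' * (pA * pmf (P \<tau> k u) k')))"
    proof -
      have "(\<integral>\<omega>. indicator (A \<tau> h u) \<omega> * \<Phi> \<omega> \<partial>measure_pmf M) =
        (\<integral>\<omega>. (\<Sum>k'\<in>UNIV. \<Sum>u'\<in>UNIV. w' k' u' * (indicator (A \<tau> h u) \<omega> * (if k' = cp (hist G i \<omega> (Suc \<tau>)) then 1 else 0) *
                     (if u' = action \<omega> (Suc \<tau>) i then 1 else 0))) \<partial>measure_pmf M)"
        by (simp only: ptw)
      also have "\<dots> = (\<Sum>k'\<in>UNIV. \<integral>\<omega>. (\<Sum>u'\<in>UNIV. w' k' u' * (indicator (A \<tau> h u) \<omega> * (if k' = cp (hist G i \<omega> (Suc \<tau>)) then 1 else 0) *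
                     (if u' = action \<omega> (Suc \<tau>) i then 1 else 0))) \<partial>measure_pmf M)"
        by (subst Bochner_Integration.integral_sum) (simp_all add: intg)
      also have "\<dots> = (\<Sum>k'\<in>UNIV. \<Sum>u'\<in>UNIV. \<integral>\<omega>. w' k' u' * (indicator (A \<tau> h u) \<omega> * (if k' = cp (hist G i \<omega> (Suc \<tau>)) then 1 else 0) *
                     (if u' = action \<omega> (Suc \<tau>) i then 1 else 0)) \<partial>measure_pmf M)"
        by (rule sum.cong[OF refl], subst Bochner_Integration.integral_sum) (simp_all add: intg)
      also have "\<dots> = (\<Sum>k'\<in>UNIV. \<Sum>u'\<in>UNIV. w' k' u' * (pmf (\<rho> (Suc \<tau>) i k') u' * (pA * pmf (P \<tau> k u) k')))"
        by (simp only: integral_mult_right_zero stepc)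
      finally show ?thesis .
    qed
    have rew: "(\<integral>\<omega>. indicator (A \<tau> h u) \<omega> * reward G i \<omega> \<tau> \<partial>measure_pmf M) = pA * r \<tau> k u"
      using IP[OF \<tau>T' pos] unfolding pA_def k_def by (simp add: cond_exp_mult[OF pos])
    have "(\<integral>\<omega>. indicator (A \<tau> h u) \<omega> * W \<tau> \<omega> \<partial>measure_pmf M) =
          (\<integral>\<omega>. indicator (A \<tau> h u) \<omega> * reward G i \<omega> \<tau> + indicator (A \<tau> h u) \<omega> * W (Suc \<tau>) \<omega> \<partial>measure_pmf M)"
      by (simp add: Wsplit[OF \<tau>T'] distrib_left)
    also have "\<dots> = (\<integral>\<omega>. indicator (A \<tau> h u) \<omega> * reward G i \<omega> \<tau> \<partial>measure_pmf M) +
                    (\<integral>\<omega>. indicator (A \<tau> h u) \<omega> * W (Suc \<tau>) \<omega> \<partial>measure_pmf M)"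
      by (rule Bochner_Integration.integral_add) (rule intg)+
    also have "\<dots> = pA * r \<tau> k u + (\<Sum>k'\<in>UNIV. \<Sum>u'\<in>UNIV. w' k' u' * (pmf (\<rho> (Suc \<tau>) i k') u' * (pA * pmf (P \<tau> k u) k')))"
      by (simp only: rew stepa stepb)
    also have "\<dots> = pA * (r \<tau> k u + (\<Sum>k'\<in>UNIV. pmf (P \<tau> k u) k' * (\<Sum>u'\<in>UNIV. pmf (\<rho> (Suc \<tau>) i k') u' * w' k' u')))"
      by (simp add: distrib_left sum_distrib_left mult_ac)
    finally have "cond_exp M (A \<tau> h u) (W \<tau>) =
        (r \<tau> k u + (\<Sum>k'\<in>UNIV. pmf (P \<tau> k u) k' * (\<Sum>u'\<in>UNIV. pmf (\<rho> (Suc \<tau>) i k') u' * w' k' u')))"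
      using pos unfolding cond_exp_def pA_def by simp
    then show "cond_exp M (A \<tau> h u) (W \<tau>) =
        (\<lambda>k u. r \<tau> k u + (\<Sum>k'\<in>UNIV. pmf (P \<tau> k u) k' * (\<Sum>u'\<in>UNIV. pmf (\<rho> (Suc \<tau>) i k') u' * w' k' u'))) (cp h) u"
      unfolding k_def by simp
  qed
  have base: "\<exists>w. \<forall>h u. measure_pmf.prob M (A \<tau> h u) > 0 \<longrightarrow> cond_exp M (A \<tau> h u) (W \<tau>) = w (cp h) u"
    if "Suc \<tau> = T" for \<tau>
  proof (intro exI allI impI)
    fix h u assume pos: "measure_pmf.prob M (A \<tau> h u) > 0"
    have "W \<tau> = (\<lambda>\<omega>. reward G i \<omega> \<tau>)" unfolding W_def using that[symmetric] by (auto simp: fun_eq_iff)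
    then show "cond_exp M (A \<tau> h u) (W \<tau>) = r \<tau> (cp h) u"
      using IP[OF _ pos] that by simp
  qed
  have all: "\<forall>\<tau>. \<tau> + Suc d = T \<longrightarrow> (\<exists>w. \<forall>h u. measure_pmf.prob M (A \<tau> h u) > 0 \<longrightarrow>
                  cond_exp M (A \<tau> h u) (W \<tau>) = w (cp h) u)" for d
  proof (induction d)
    case 0 then show ?case using base by simp
  next
    case (Suc d)
    show ?case
    proof (intro allI impI)
      fix \<tau> assume e: "\<tau> + Suc (Suc d) = T"
      then obtain w' where "\<forall>h u. measure_pmf.prob M (A (Suc \<tau>) h u) > 0 \<longrightarrow>
                  cond_exp M (A (Suc \<tau>) h u) (W (Suc \<tau>)) = w' (cp h) u"
        using Suc.IH by (metis add_Suc_shift)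
      then show "\<exists>w. \<forall>h u. measure_pmf.prob M (A \<tau> h u) > 0 \<longrightarrow> cond_exp M (A \<tau> h u) (W \<tau>) = w (cp h) u"
        using step[of \<tau> w'] e by simp
    qed
  qed
  have "\<forall>\<tau>. \<exists>w. \<tau> < T \<longrightarrow> (\<forall>h u. measure_pmf.prob M (A \<tau> h u) > 0 \<longrightarrow>
                  cond_exp M (A \<tau> h u) (W \<tau>) = w (cp h) u)"
  proof
    fix \<tau> show "\<exists>w. \<tau> < T \<longrightarrow> (\<forall>h u. measure_pmf.prob M (A \<tau> h u) > 0 \<longrightarrow>
                  cond_exp M (A \<tau> h u) (W \<tau>) = w (cp h) u)"
    proof (cases "\<tau> < T")
      case True
      then obtain d where "\<tau> + Suc d = T" using less_imp_Suc_add by (metis add_Suc_right)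
      then show ?thesis using all[of d] by blast
    qed simp
  qed
  from choice[OF this] obtain v where v: "\<forall>\<tau>. \<tau> < T \<longrightarrow> (\<forall>h u. measure_pmf.prob M (A \<tau> h u) > 0 \<longrightarrow>
                  cond_exp M (A \<tau> h u) (W \<tau>) = v \<tau> (cp h) u)" by blast
  have Weq: "W \<tau> = (\<lambda>\<omega>. \<Sum>t\<in>{\<tau>..<horizon G}. reward G i \<omega> t)" for \<tau>
    by (simp add: fun_eq_iff W_def T_def)
  show ?thesis
    by (rule exI[of _ v]) (use v in \<open>simp add: M_def g_def T_def A_def Weq cp_def\<close>)
qed



lemma pmf_run_Suc:
  fixes G :: "('p::finite,'x::finite,'u::finite,'y,'w::finite,'h::finite) game"
  shows "pmf (run G g (Suc t)) \<omega>' =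
    (\<Sum>y\<in>{y. olen y = t}. (\<Sum>u\<in>UNIV. pmf (map_pmf (\<lambda>w. (fst y, fst (snd y), snd (snd y) @ [(u, w)])) (noise G t)) \<omega>' *
        (\<Prod>i\<in>UNIV. pmf (g t i (hist G i y t)) (u i))) * pmf (run G g t) y)"
proof -
  have "pmf (run G g (Suc t)) \<omega>' = (\<integral>y. pmf (bind_pmf (Pi_pmf UNIV undefined (\<lambda>i. g t i (hist G i y t))) (\<lambda>u.
         map_pmf (\<lambda>w. (fst y, fst (snd y), snd (snd y) @ [(u, w)])) (noise G t))) \<omega>' \<partial>measure_pmf (run G g t))"
    by (simp add: pmf_bind)
  also have "\<dots> = (\<Sum>y\<in>{y. olen y = t}. pmf (bind_pmf (Pi_pmf UNIV undefined (\<lambda>i. g t i (hist G i y t))) (\<lambda>u.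
         map_pmf (\<lambda>w. (fst y, fst (snd y), snd (snd y) @ [(u, w)])) (noise G t))) \<omega>' * pmf (run G g t) y)"
    by (rule integral_measure_pmf_real[OF finite_olen]) (auto dest: olen_run)
  also have "\<dots> = (\<Sum>y\<in>{y. olen y = t}. (\<Sum>u\<in>UNIV. pmf (map_pmf (\<lambda>w. (fst y, fst (snd y), snd (snd y) @ [(u, w)])) (noise G t)) \<omega>' *
        (\<Prod>i\<in>UNIV. pmf (g t i (hist G i y t)) (u i))) * pmf (run G g t) y)"
  proof (rule sum.cong[OF refl])
    fix y
    have "pmf (bind_pmf (Pi_pmf UNIV undefined (\<lambda>i. g t i (hist G i y t))) (\<lambda>u.
         map_pmf (\<lambda>w. (fst y, fst (snd y), snd (snd y) @ [(u, w)])) (noise G t))) \<omega>' =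
      (\<integral>u. pmf (map_pmf (\<lambda>w. (fst y, fst (snd y), snd (snd y) @ [(u, w)])) (noise G t)) \<omega>'
         \<partial>measure_pmf (Pi_pmf UNIV undefined (\<lambda>i. g t i (hist G i y t))))"
      by (rule pmf_bind)
    also have "\<dots> = (\<Sum>u\<in>UNIV. pmf (map_pmf (\<lambda>w. (fst y, fst (snd y), snd (snd y) @ [(u, w)])) (noise G t)) \<omega>' *
        pmf (Pi_pmf UNIV undefined (\<lambda>i. g t i (hist G i y t))) u)"
      by (rule integral_measure_pmf_real) auto
    also have "\<dots> = (\<Sum>u\<in>UNIV. pmf (map_pmf (\<lambda>w. (fst y, fst (snd y), snd (snd y) @ [(u, w)])) (noise G t)) \<omega>' *
        (\<Prod>i\<in>UNIV. pmf (g t i (hist G i y t)) (u i)))"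
      by (rule sum.cong[OF refl]) (subst pmf_Pi', auto)
    finally show "pmf (bind_pmf (Pi_pmf UNIV undefined (\<lambda>i. g t i (hist G i y t))) (\<lambda>u.
         map_pmf (\<lambda>w. (fst y, fst (snd y), snd (snd y) @ [(u, w)])) (noise G t))) \<omega>' * pmf (run G g t) y =
       (\<Sum>u\<in>UNIV. pmf (map_pmf (\<lambda>w. (fst y, fst (snd y), snd (snd y) @ [(u, w)])) (noise G t)) \<omega>' *
        (\<Prod>i\<in>UNIV. pmf (g t i (hist G i y t)) (u i))) * pmf (run G g t) y" by simp
  qed
  finally show ?thesis .
qed

lemma run_conv:
  fixes G :: "('p::finite,'x::finite,'u::finite,'y,'w::finite,'h::finite) game"
  assumes conv: "\<And>t i h u. (\<lambda>m. pmf (gs m t i h) u) \<longlonglongrightarrow> pmf (g t i h) u"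
  shows "(\<lambda>m. pmf (run G (gs m) t) \<omega>) \<longlonglongrightarrow> pmf (run G g t) \<omega>"
proof (induction t arbitrary: \<omega>)
  case 0
  then show ?case by simp
next
  case (Suc t)
  show ?case
    unfolding pmf_run_Suc
    by (intro tendsto_intros conv Suc.IH)
qed

lemma integral_conv:
  fixes G :: "('p::finite,'x::finite,'u::finite,'y,'w::finite,'h::finite) game"
    and F :: "('p,'x,'u,'w,'h) outcome \<Rightarrow> real"
  assumes conv: "\<And>t i h u. (\<lambda>m. pmf (gs m t i h) u) \<longlonglongrightarrow> pmf (g t i h) u"
  shows "(\<lambda>m. \<integral>\<omega>. F \<omega> \<partial>measure_pmf (run G (gs m) t)) \<longlonglongrightarrow> (\<integral>\<omega>. F \<omega> \<partial>measure_pmf (run G g t))"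
proof -
  have e: "(\<integral>\<omega>. F \<omega> \<partial>measure_pmf (run G g' t)) = (\<Sum>\<omega>\<in>{y. olen y = t}. F \<omega> * pmf (run G g' t) \<omega>)" for g'
    by (rule integral_measure_pmf_real[OF finite_olen]) (auto dest: olen_run)
  show ?thesis unfolding e by (intro tendsto_intros run_conv[OF conv])
qed

lemma set_run_eq:
  assumes "\<And>t i h. t < horizon G \<Longrightarrow> set_pmf (g t i h) = set_pmf (g' t i h)" "t \<le> horizon G"
  shows "set_pmf (run G g t) = set_pmf (run G g' t)"
  using assms(2)
proof (induction t)
  case 0 then show ?case by simp
next
  case (Suc t)
  then have t: "t < horizon G" by simp
  have IH: "set_pmf (run G g t) = set_pmf (run G g' t)" using Suc by simp
  have "set_pmf (Pi_pmf UNIV undefined (\<lambda>i. g t i (hist G i \<omega> t))) =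
        set_pmf (Pi_pmf UNIV undefined (\<lambda>i. g' t i (hist G i \<omega> t)))" for \<omega>
    by (simp add: set_Pi_pmf o_def assms(1)[OF t])
  then show ?case by (simp add: IH)
qed

lemma prob_pos_eq:
  assumes "set_pmf M = set_pmf M'"
  shows "measure_pmf.prob M A > 0 \<longleftrightarrow> measure_pmf.prob M' A > 0"
  using assms by (simp add: zero_less_measure_iff measure_pmf_zero_iff less_le measure_nonneg)

lemma prob_hu:
  fixes G :: "('p::finite,'x::finite,'u::finite,'y,'w::finite,'h::finite) game"
  assumes "t < horizon G"
  shows "measure_pmf.prob (play G g) (hu_event G t i h u) =
         measure_pmf.prob (play G g) {\<omega>. hist G i \<omega> t = h} * pmf (g t i h) u"
proof -
  define c where "c h' = (if h' = h then 1 else (0::real))" for h'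
  have "measure_pmf.prob (play G g) (hu_event G t i h u) =
        (\<integral>\<omega>. c (hist G i \<omega> t) * indicator {\<omega>. action \<omega> t i = u} \<omega> \<partial>measure_pmf (run G g (horizon G)))"
    unfolding prob_int play_def by (rule Bochner_Integration.integral_cong) (auto simp: c_def hu_event_def indicator_def)
  also have "\<dots> = (\<integral>\<omega>. c (hist G i \<omega> t) * pmf (g t i (hist G i \<omega> t)) u \<partial>measure_pmf (run G g (horizon G)))"
    by (rule action_law[OF assms])
  also have "\<dots> = (\<integral>\<omega>. indicator {\<omega>. hist G i \<omega> t = h} \<omega> * pmf (g t i h) u \<partial>measure_pmf (run G g (horizon G)))"
    by (rule Bochner_Integration.integral_cong) (auto simp: c_def indicator_def)
  also have "\<dots> = measure_pmf.prob (play G g) {\<omega>. hist G i \<omega> t = h} * pmf (g t i h) u"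
    unfolding play_def prob_int by simp
  finally show ?thesis .
qed



definition Nrm :: "('u \<Rightarrow> real) \<Rightarrow> 'u set \<Rightarrow> 'u \<Rightarrow> real" where
  "Nrm y S u = (let sp = (\<Sum>u'\<in>S. max (y u') 0); sN = max 0 (1 - sp) in
       (max (y u) 0 + sN / real (card S)) / (sp + sN))"

lemma Nrm_den: "(\<Sum>u'\<in>S. max (y u') 0) + max 0 (1 - (\<Sum>u'\<in>S. max (y u') (0::real))) \<ge> 1"
  by simp

lemma Nrm_nonneg: "Nrm y S u \<ge> 0"
proof -
  have "(\<Sum>u'\<in>S. max (y u') 0) + max 0 (1 - (\<Sum>u'\<in>S. max (y u') (0::real))) \<ge> 1" by (rule Nrm_den)
  moreover have "0 \<le> max (y u) 0 + max 0 (1 - (\<Sum>u'\<in>S. max (y u') (0::real))) / real (card S)"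
    by simp
  ultimately show ?thesis unfolding Nrm_def Let_def by (intro divide_nonneg_pos) auto
qed

lemma Nrm_sum:
  assumes "finite S" "S \<noteq> {}"
  shows "(\<Sum>u\<in>S. Nrm y S u) = 1"
proof -
  define sp where "sp = (\<Sum>u'\<in>S. max (y u') (0::real))"
  define sN where "sN = max 0 (1 - sp)"
  have d: "sp + sN \<ge> 1" unfolding sp_def sN_def by simp
  have c: "card S > 0" using assms by (simp add: card_gt_0_iff)
  have "(\<Sum>u\<in>S. Nrm y S u) = (\<Sum>u\<in>S. (max (y u) 0 + sN / real (card S))) / (sp + sN)"
    unfolding Nrm_def Let_def sp_def[symmetric] sN_def[symmetric] by (simp add: sum_divide_distrib)
  also have "(\<Sum>u\<in>S. (max (y u) 0 + sN / real (card S))) = sp + sN"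
    using c by (simp add: sum.distrib sp_def)
  finally show ?thesis using d by simp
qed

lemma Nrm_id:
  assumes "finite S" "S \<noteq> {}" "\<And>u. u \<in> S \<Longrightarrow> y u \<ge> 0" "(\<Sum>u\<in>S. y u) = 1" "u \<in> S"
  shows "Nrm y S u = y u"
proof -
  have sp: "(\<Sum>u'\<in>S. max (y u') (0::real)) = 1"
    using assms(3,4) by (simp add: max_absorb1 cong: sum.cong)
  show ?thesis unfolding Nrm_def Let_def sp using assms(3,5) by (simp add: max_absorb1)
qed

locale gsetup =
  fixes G :: "('p::finite,'x::finite,'u::finite,'y::finite,'w::finite,'h::finite) game"
    and io1 :: "'p \<Rightarrow> 'h \<Rightarrow> 'k::finite" and io :: "nat \<Rightarrow> 'p \<Rightarrow> 'k \<Rightarrow> ('u \<times> 'y) \<Rightarrow> 'k"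
  assumes wf: "wf_game G" and msi: "mutually_sufficient G io1 io"
begin

definition II :: "(nat \<times> 'p \<times> 'k \<times> 'u) set" where
  "II = {(t,i,k,u). t < horizon G \<and> u \<in> acts G t i}"

definition mA :: "nat \<Rightarrow> 'p \<Rightarrow> real" where
  "mA t i = real (card (acts G t i))"

definition Delta :: "(nat \<times> 'p \<times> 'k \<times> 'u \<Rightarrow> real) set" where
  "Delta = {z. (\<forall>a. a \<notin> II \<longrightarrow> z a = 0) \<and> (\<forall>a\<in>II. 0 \<le> z a) \<and>
               (\<forall>t<horizon G. \<forall>i k. (\<Sum>u\<in>acts G t i. z (t,i,k,u)) = 1)}"

definition Dc :: "real \<Rightarrow> (nat \<times> 'p \<times> 'k \<times> 'u \<Rightarrow> real) set" where
  "Dc c = {z\<in>Delta. \<forall>a\<in>II. c \<le> z a}"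

definition strat :: "(nat \<times> 'p \<times> 'k \<times> 'u \<Rightarrow> real) \<Rightarrow> nat \<Rightarrow> 'p \<Rightarrow> 'k \<Rightarrow> 'u pmf" where
  "strat z t i k = embed_pmf (\<lambda>u. z (t,i,k,u))"

definition prof :: "(nat \<times> 'p \<times> 'k \<times> 'u \<Rightarrow> real) \<Rightarrow> ('p,'h,'u,'y) profile" where
  "prof z = kbased io1 io (strat z)"

definition posv :: "(nat \<times> 'p \<times> 'k \<times> 'u \<Rightarrow> real) \<Rightarrow> bool" where
  "posv z \<longleftrightarrow> z \<in> Delta \<and> (\<forall>a\<in>II. z a > 0)"

lemma finite_acts: "finite (acts G t i)" by simp

lemma acts_ne: "t < horizon G \<Longrightarrow> acts G t i \<noteq> {}"
  using wf unfolding wf_game_def by auto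

lemma mA_pos: "t < horizon G \<Longrightarrow> mA t i \<ge> 1"
  using acts_ne[of t i] unfolding mA_def
  by (metis One_nat_def Suc_leI card_gt_0_iff finite_acts of_nat_1 of_nat_le_iff)

lemma mA_le: "mA t i \<le> real CARD('u)"
  unfolding mA_def by (simp add: card_mono)

lemma finite_II: "finite II"
proof -
  have "II \<subseteq> {..<horizon G} \<times> UNIV \<times> UNIV \<times> UNIV" unfolding II_def by auto
  then show ?thesis by (rule finite_subset) auto
qed

lemma Delta_zero: "z \<in> Delta \<Longrightarrow> a \<notin> II \<Longrightarrow> z a = 0"
  unfolding Delta_def mem_Collect_eq by blast

lemma pmf_strat:
  assumes "z \<in> Delta" "t < horizon G"
  shows "pmf (strat z t i k) u = z (t,i,k,u)"
proof -
  have nn: "0 \<le> z (t,i,k,u')" for u'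
    using assms unfolding Delta_def II_def by (cases "u' \<in> acts G t i") auto
  have "(\<Sum>u'\<in>UNIV. z (t,i,k,u')) = (\<Sum>u'\<in>acts G t i. z (t,i,k,u'))"
    by (rule sum.mono_neutral_right) (use assms in \<open>auto simp: Delta_def II_def\<close>)
  also have "\<dots> = 1" using assms unfolding Delta_def by auto
  finally have s: "(\<Sum>u'\<in>UNIV. z (t,i,k,u')) = 1" .
  have "(\<integral>\<^sup>+x. ennreal (z (t,i,k,x)) \<partial>count_space UNIV) = (\<Sum>u'\<in>UNIV. ennreal (z (t,i,k,u')))"
    by (rule nn_integral_count_space_finite) simp
  also have "\<dots> = ennreal (\<Sum>u'\<in>UNIV. z (t,i,k,u'))"
    by (rule sum_ennreal) (use nn in auto)
  also have "\<dots> = 1" using s by simp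
  finally have "(\<integral>\<^sup>+x. ennreal (z (t,i,k,x)) \<partial>count_space UNIV) = 1" .
  then show ?thesis unfolding strat_def using pmf_embed_pmf[of "\<lambda>u. z (t,i,k,u)"] nn by blast
qed

lemma pmf_prof:
  assumes "z \<in> Delta" "t < horizon G"
  shows "pmf (prof z t i h) u = z (t,i,compress io1 io i h,u)"
  unfolding prof_def kbased_def using pmf_strat[OF assms] by simp

lemma set_strat:
  assumes "z \<in> Delta" "t < horizon G"
  shows "set_pmf (strat z t i k) \<subseteq> acts G t i"
proof
  fix u assume "u \<in> set_pmf (strat z t i k)"
  then have "z (t,i,k,u) \<noteq> 0" using pmf_strat[OF assms] by (simp add: set_pmf_eq)
  then have "(t,i,k,u) \<in> II" using Delta_zero[OF assms(1)] by blast
  then show "u \<in> acts G t i" unfolding II_def by simp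
qed

lemma set_strat_pos:
  assumes "posv z" "t < horizon G"
  shows "set_pmf (strat z t i k) = acts G t i"
proof
  have z: "z \<in> Delta" using assms(1) unfolding posv_def by simp
  show "set_pmf (strat z t i k) \<subseteq> acts G t i" by (rule set_strat[OF z assms(2)])
  show "acts G t i \<subseteq> set_pmf (strat z t i k)"
  proof
    fix u assume "u \<in> acts G t i"
    then have "(t,i,k,u) \<in> II" using assms(2) unfolding II_def by simp
    then have "z (t,i,k,u) > 0" using assms(1) unfolding posv_def by blast
    then show "u \<in> set_pmf (strat z t i k)" using pmf_strat[OF z assms(2)] by (simp add: set_pmf_eq)
  qed
qed

lemma valid_strat: "z \<in> Delta \<Longrightarrow> valid_kstrat G (strat z)"
  unfolding valid_kstrat_def using set_strat by blast

lemma valid_prof: "z \<in> Delta \<Longrightarrow> valid_profile G (prof z)"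
  unfolding valid_profile_def prof_def kbased_def using set_strat by blast

lemma mixed_prof: "posv z \<Longrightarrow> fully_mixed G (prof z)"
  unfolding fully_mixed_def prof_def kbased_def using set_strat_pos by blast

definition z0 :: "nat \<times> 'p \<times> 'k \<times> 'u \<Rightarrow> real" where
  "z0 a = (case a of (t,i,k,u) \<Rightarrow> if (t,i,k,u) \<in> II then 1 / mA t i else 0)"

lemma posv_z0: "posv z0"
proof -
  have "(\<Sum>u\<in>acts G t i. z0 (t,i,k,u)) = 1" if "t < horizon G" for t i k
  proof -
    have "(\<Sum>u\<in>acts G t i. z0 (t,i,k,u)) = (\<Sum>u\<in>acts G t i. 1 / mA t i)"
      by (rule sum.cong) (use that in \<open>auto simp: z0_def II_def\<close>)
    also have "\<dots> = 1" using mA_pos[OF that, of i] acts_ne[OF that, of i] by (simp add: mA_def)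
    finally show ?thesis .
  qed
  moreover have "z0 a > 0" if "a \<in> II" for a
  proof -
    obtain t i k u where a: "a = (t,i,k,u)" by (cases a) auto
    then have "t < horizon G" using that unfolding II_def by simp
    then show ?thesis using mA_pos[of t i] that a unfolding z0_def by simp
  qed
  moreover have "z0 a = 0" if "a \<notin> II" for a
    using that unfolding z0_def by (auto split: prod.splits)
  ultimately show ?thesis unfolding posv_def Delta_def mem_Collect_eq by (meson less_imp_le)
qed

definition g0 where "g0 = prof z0"

definition adm :: "nat \<Rightarrow> 'p \<Rightarrow> ('h,'u,'y) hist \<Rightarrow> bool" where
  "adm t i h \<longleftrightarrow> measure_pmf.prob (play G g0) {\<omega>. hist G i \<omega> t = h} > 0"

definition reach :: "nat \<Rightarrow> 'p \<Rightarrow> 'k \<Rightarrow> bool" where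
  "reach t i k \<longleftrightarrow> (\<exists>h. compress io1 io i h = k \<and> adm t i h)"

definition rep :: "nat \<Rightarrow> 'p \<Rightarrow> 'k \<Rightarrow> ('h,'u,'y) hist" where
  "rep t i k = (SOME h. compress io1 io i h = k \<and> adm t i h)"

lemma rep: "reach t i k \<Longrightarrow> compress io1 io i (rep t i k) = k \<and> adm t i (rep t i k)"
  unfolding reach_def rep_def by (rule someI_ex)

lemma set_play_eq:
  assumes "posv z"
  shows "set_pmf (play G (prof z)) = set_pmf (play G g0)"
  unfolding play_def g0_def
proof (rule set_run_eq)
  fix t i h assume t: "t < horizon G"
  show "set_pmf (prof z t i h) = set_pmf (prof z0 t i h)"
    unfolding prof_def kbased_def using set_strat_pos[OF assms t] set_strat_pos[OF posv_z0 t] by simp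
qed simp

lemma pos_hu:
  assumes "posv z" "t < horizon G"
  shows "measure_pmf.prob (play G (prof z)) (hu_event G t i h u) > 0 \<longleftrightarrow> adm t i h \<and> u \<in> acts G t i"
proof -
  have z: "z \<in> Delta" using assms(1) unfolding posv_def by simp
  have "measure_pmf.prob (play G (prof z)) (hu_event G t i h u) =
        measure_pmf.prob (play G (prof z)) {\<omega>. hist G i \<omega> t = h} * z (t,i,compress io1 io i h,u)"
    by (simp add: prob_hu[OF assms(2)] pmf_prof[OF z assms(2)])
  moreover have "measure_pmf.prob (play G (prof z)) {\<omega>. hist G i \<omega> t = h} > 0 \<longleftrightarrow> adm t i h"
    unfolding adm_def by (rule prob_pos_eq[OF set_play_eq[OF assms(1)]])
  moreover have "z (t,i,compress io1 io i h,u) > 0 \<longleftrightarrow> u \<in> acts G t i"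
       "z (t,i,compress io1 io i h,u) \<ge> 0"
  proof -
    show "z (t,i,compress io1 io i h,u) > 0 \<longleftrightarrow> u \<in> acts G t i"
    proof
      assume "u \<in> acts G t i"
      then have "(t,i,compress io1 io i h,u) \<in> II" using assms(2) unfolding II_def by simp
      then show "z (t,i,compress io1 io i h,u) > 0" using assms(1) unfolding posv_def by blast
    next
      assume p: "z (t,i,compress io1 io i h,u) > 0"
      show "u \<in> acts G t i"
      proof (rule ccontr)
        assume "u \<notin> acts G t i"
        then have "(t,i,compress io1 io i h,u) \<notin> II" unfolding II_def by simp
        then show False using Delta_zero[OF z] p by force
      qed
    qed
    then show "z (t,i,compress io1 io i h,u) \<ge> 0"
      using Delta_zero[OF z, of "(t,i,compress io1 io i h,u)"] unfolding II_def using assms(2)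
      by (cases "u \<in> acts G t i") auto
  qed
  moreover have "measure_pmf.prob (play G (prof z)) {\<omega>. hist G i \<omega> t = h} \<ge> 0" by simp
  ultimately show ?thesis by (simp add: zero_less_mult_iff less_le)
qed

definition Wr :: "'p \<Rightarrow> nat \<Rightarrow> ('p,'x,'u,'w,'h) outcome \<Rightarrow> real" where
  "Wr i \<tau> \<omega> = (\<Sum>t\<in>{\<tau>..<horizon G}. reward G i \<omega> t)"

definition q :: "(nat \<times> 'p \<times> 'k \<times> 'u \<Rightarrow> real) \<Rightarrow> nat \<times> 'p \<times> 'k \<times> 'u \<Rightarrow> real" where
  "q z a = (case a of (t,i,k,u) \<Rightarrow> if reach t i k then
      cond_exp (play G (prof z)) (hu_event G t i (rep t i k) u) (Wr i t) else 0)"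

lemma cond_exp_Wr_bound:
  assumes "z \<in> Delta"
  shows "\<bar>cond_exp (play G (prof z)) A (Wr i \<tau>)\<bar> \<le> real (horizon G)"
proof (cases "measure_pmf.prob (play G (prof z)) A > 0")
  case True
  show ?thesis
    by (rule cond_exp_bound[OF _ True]) (use W_bound[OF wf valid_prof[OF assms]] in \<open>auto simp: Wr_def\<close>)
next
  case False
  then have "measure_pmf.prob (play G (prof z)) A = 0" using measure_nonneg[of _ A] by (simp add: less_le)
  then show ?thesis unfolding cond_exp_def by simp
qed

lemma q_bound: "z \<in> Delta \<Longrightarrow> \<bar>q z a\<bar> \<le> real (horizon G)"
  unfolding q_def using cond_exp_Wr_bound by (auto split: prod.splits)

definition Phi :: "real \<Rightarrow> (nat \<times> 'p \<times> 'k \<times> 'u \<Rightarrow> real) \<Rightarrow> nat \<times> 'p \<times> 'k \<times> 'u \<Rightarrow> real" where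
  "Phi lam z a = (case a of (t,i,k,u) \<Rightarrow> if (t,i,k,u) \<in> II then
      exp (lam * q z (t,i,k,u)) / (\<Sum>u'\<in>acts G t i. exp (lam * q z (t,i,k,u'))) else 0)"

definition cc :: "real \<Rightarrow> real" where
  "cc lam = exp (- (2 * lam * real (horizon G))) / (real CARD('u) + 1)"

lemma cc_pos: "cc lam > 0" unfolding cc_def by simp

lemma mA_cc: "mA t i * cc lam < 1" if "lam \<ge> 0"
proof -
  have e: "exp (- (2 * lam * real (horizon G))) \<le> 1" using that by simp
  have "mA t i * cc lam = mA t i * exp (- (2 * lam * real (horizon G))) / (real CARD('u) + 1)"
    unfolding cc_def by simp
  also have "\<dots> \<le> mA t i / (real CARD('u) + 1)"
    using e by (intro divide_right_mono) (auto simp: mA_def intro: mult_left_le)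
  also have "\<dots> < 1" using mA_le[of t i] by (simp add: divide_less_eq)
  finally show ?thesis .
qed

lemma Phi_Dc:
  assumes z: "z \<in> Delta" and lam: "lam \<ge> 0"
  shows "Phi lam z \<in> Dc (cc lam)"
proof -
  define T where "T = real (horizon G)"
  have qb: "- T \<le> q z a \<and> q z a \<le> T" for a using q_bound[OF z, of a] unfolding T_def by auto
  have lo: "exp (- (lam * T)) \<le> exp (lam * q z a)" for a
    using qb[of a] lam mult_left_mono[of "-T" "q z a" lam] by simp
  have hi: "exp (lam * q z a) \<le> exp (lam * T)" for a using qb[of a] lam
    by (simp add: mult_left_mono)
  have sum1: "(\<Sum>u\<in>acts G t i. Phi lam z (t,i,k,u)) = 1" if t: "t < horizon G" for t i k
  proof -
    have pos: "(\<Sum>u'\<in>acts G t i. exp (lam * q z (t,i,k,u'))) > 0"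
      using acts_ne[OF t] by (intro sum_pos) auto
    have "(\<Sum>u\<in>acts G t i. Phi lam z (t,i,k,u)) =
          (\<Sum>u\<in>acts G t i. exp (lam * q z (t,i,k,u)) / (\<Sum>u'\<in>acts G t i. exp (lam * q z (t,i,k,u'))))"
      by (rule sum.cong) (use t in \<open>auto simp: Phi_def II_def\<close>)
    also have "\<dots> = 1" using pos by (simp add: sum_divide_distrib[symmetric])
    finally show ?thesis .
  qed
  have lb: "cc lam \<le> Phi lam z a" if a: "a \<in> II" for a
  proof -
    obtain t i k u where ae: "a = (t,i,k,u)" by (cases a) auto
    have t: "t < horizon G" and u: "u \<in> acts G t i" using a ae unfolding II_def by auto
    have den_pos: "(\<Sum>u'\<in>acts G t i. exp (lam * q z (t,i,k,u'))) > 0"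
      using acts_ne[OF t] by (intro sum_pos) auto
    have den: "(\<Sum>u'\<in>acts G t i. exp (lam * q z (t,i,k,u'))) \<le> mA t i * exp (lam * T)"
    proof -
      have "(\<Sum>u'\<in>acts G t i. exp (lam * q z (t,i,k,u'))) \<le> (\<Sum>u'\<in>acts G t i. exp (lam * T))"
        by (rule sum_mono) (rule hi)
      then show ?thesis by (simp add: mA_def)
    qed
    have "cc lam \<le> exp (- (2 * lam * T)) / mA t i"
      unfolding cc_def T_def using mA_le[of t i] mA_pos[OF t, of i]
      by (intro divide_left_mono) auto
    also have "\<dots> = exp (- (lam * T)) / (mA t i * exp (lam * T))"
    proof -
      have "exp (- (lam * T) - lam * T) = exp (- (lam * T)) / exp (lam * T)" by (rule exp_diff)
      moreover have "- (lam * T) - lam * T = - (2 * lam * T)" by simp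
      ultimately have "exp (- (2 * lam * T)) = exp (- (lam * T)) / exp (lam * T)" by simp
      then show ?thesis by simp
    qed
    also have "\<dots> \<le> exp (lam * q z (t,i,k,u)) / (\<Sum>u'\<in>acts G t i. exp (lam * q z (t,i,k,u')))"
      by (rule frac_le) (use lo den den_pos in auto)
    also have "\<dots> = Phi lam z a" using a ae by (simp add: Phi_def)
    finally show ?thesis .
  qed
  have z1: "\<forall>a. a \<notin> II \<longrightarrow> Phi lam z a = 0" by (auto simp: Phi_def split: prod.splits)
  have z2: "\<forall>a\<in>II. 0 \<le> Phi lam z a" using lb cc_pos[of lam] by (meson less_imp_le order_trans)
  show ?thesis
    unfolding Dc_def Delta_def mem_Collect_eq using z1 z2 sum1 lb by blast
qed

end



lemma Nrm_cont:
  assumes "finite S" and Y: "\<And>u. u \<in> S \<Longrightarrow> (\<lambda>n. Y n u) \<longlonglongrightarrow> y u" and u: "u \<in> S"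
  shows "(\<lambda>n. Nrm (Y n) S u) \<longlonglongrightarrow> Nrm y S u"
proof -
  have d: "(\<Sum>u'\<in>S. max (y u') 0) + max 0 (1 - (\<Sum>u'\<in>S. max (y u') (0::real))) \<noteq> 0"
    using Nrm_den[of y S] by linarith
  have cS: "real (card S) \<noteq> 0" using assms(1) u by (auto simp: card_eq_0_iff)
  show ?thesis
    unfolding Nrm_def Let_def
    by (intro tendsto_divide tendsto_add tendsto_max tendsto_const tendsto_diff tendsto_sum Y u d cS)
qed

context gsetup
begin

definition Rm :: "real \<Rightarrow> (nat \<times> 'p \<times> 'k \<times> 'u \<Rightarrow> real) \<Rightarrow> nat \<times> 'p \<times> 'k \<times> 'u \<Rightarrow> real" where
  "Rm c x a = (case a of (t,i,k,u) \<Rightarrow> if (t,i,k,u) \<in> II then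
      c + (1 - mA t i * c) * Nrm (\<lambda>u'. (x (t,i,k,u') - c) / (1 - mA t i * c)) (acts G t i) u else 0)"

lemma Delta_le1:
  assumes "z \<in> Delta" "a \<in> II"
  shows "z a \<le> 1"
proof -
  obtain t i k u where a: "a = (t,i,k,u)" by (cases a) auto
  have t: "t < horizon G" and u: "u \<in> acts G t i" using assms(2) a unfolding II_def by auto
  have nn: "0 \<le> z (t,i,k,u')" if "u' \<in> acts G t i" for u'
    using assms(1) that t unfolding Delta_def II_def by auto
  have "z (t,i,k,u) \<le> (\<Sum>u'\<in>acts G t i. z (t,i,k,u'))"
    by (rule member_le_sum) (use u nn in auto)
  also have "\<dots> = 1" using assms(1) t unfolding Delta_def by auto
  finally show ?thesis using a by simp
qed

lemma Delta_cube:
  assumes "z \<in> Delta" shows "z \<in> cube II"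
proof -
  have "\<forall>a\<in>II. 0 \<le> z a" using assms unfolding Delta_def mem_Collect_eq by blast
  moreover have "\<forall>a\<in>II. z a \<le> 1" using Delta_le1[OF assms] by blast
  moreover have "\<forall>a. a \<notin> II \<longrightarrow> z a = 0" using Delta_zero[OF assms] by blast
  ultimately show ?thesis unfolding cube_def by blast
qed

lemma Rm_Dc:
  assumes c: "c > 0" and mc: "\<And>t i. mA t i * c < 1"
  shows "Rm c x \<in> Dc c"
proof -
  have ge: "c \<le> Rm c x a" if a: "a \<in> II" for a
  proof -
    obtain t i k u where ae: "a = (t,i,k,u)" by (cases a) auto
    have "0 \<le> (1 - mA t i * c) * Nrm (\<lambda>u'. (x (t,i,k,u') - c) / (1 - mA t i * c)) (acts G t i) u"
      using mc[of t i] Nrm_nonneg by (intro mult_nonneg_nonneg) auto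
    then show ?thesis using a ae unfolding Rm_def by simp
  qed
  have z1: "\<forall>a. a \<notin> II \<longrightarrow> Rm c x a = 0" by (auto simp: Rm_def split: prod.splits)
  have sum1: "(\<Sum>u\<in>acts G t i. Rm c x (t,i,k,u)) = 1" if t: "t < horizon G" for t i k
  proof -
    define y where "y = (\<lambda>u'. (x (t,i,k,u') - c) / (1 - mA t i * c))"
    have "(\<Sum>u\<in>acts G t i. Rm c x (t,i,k,u)) = (\<Sum>u\<in>acts G t i. c + (1 - mA t i * c) * Nrm y (acts G t i) u)"
      by (rule sum.cong) (use t in \<open>auto simp: Rm_def II_def y_def\<close>)
    also have "\<dots> = mA t i * c + (1 - mA t i * c) * (\<Sum>u\<in>acts G t i. Nrm y (acts G t i) u)"
      by (simp add: sum.distrib sum_distrib_left mA_def)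
    also have "\<dots> = 1" using Nrm_sum[OF finite_acts acts_ne[OF t]] by simp
    finally show ?thesis .
  qed
  have z2: "\<forall>a\<in>II. 0 \<le> Rm c x a" using ge c by (meson less_imp_le order_trans)
  show ?thesis unfolding Dc_def Delta_def mem_Collect_eq using z1 z2 sum1 ge by blast
qed

lemma Rm_id:
  assumes c: "c > 0" and mc: "\<And>t i. mA t i * c < 1" and x: "x \<in> Dc c"
  shows "Rm c x = x"
proof
  fix a
  show "Rm c x a = x a"
  proof (cases "a \<in> II")
    case False
    then show ?thesis using x Delta_zero[of x a] unfolding Dc_def by (auto simp: Rm_def split: prod.splits)
  next
    case True
    obtain t i k u where ae: "a = (t,i,k,u)" by (cases a) auto
    have t: "t < horizon G" and u: "u \<in> acts G t i" using True ae unfolding II_def by auto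
    define y where "y = (\<lambda>u'. (x (t,i,k,u') - c) / (1 - mA t i * c))"
    have pos: "1 - mA t i * c > 0" using mc[of t i] by simp
    have y0: "y u' \<ge> 0" if "u' \<in> acts G t i" for u'
    proof -
      have "(t,i,k,u') \<in> II" using t that unfolding II_def by simp
      then have "c \<le> x (t,i,k,u')" using x unfolding Dc_def by blast
      then show ?thesis unfolding y_def using pos by simp
    qed
    have ys: "(\<Sum>u'\<in>acts G t i. y u') = 1"
    proof -
      have "(\<Sum>u'\<in>acts G t i. y u') = (\<Sum>u'\<in>acts G t i. x (t,i,k,u') - c) / (1 - mA t i * c)"
        unfolding y_def by (simp add: sum_divide_distrib)
      also have "(\<Sum>u'\<in>acts G t i. x (t,i,k,u') - c) = 1 - mA t i * c"
        using x t unfolding Dc_def Delta_def by (simp add: sum_subtractf mA_def)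
      finally show ?thesis using pos by simp
    qed
    have "Nrm y (acts G t i) u = y u"
      by (rule Nrm_id[OF finite_acts acts_ne[OF t] y0 ys u])
    then show ?thesis using True ae pos unfolding Rm_def y_def by simp
  qed
qed

lemma Rm_cont:
  assumes X: "\<And>a. a \<in> II \<Longrightarrow> (\<lambda>n. X n a) \<longlonglongrightarrow> x a" and a: "a \<in> II"
  shows "(\<lambda>n. Rm c (X n) a) \<longlonglongrightarrow> Rm c x a"
proof -
  obtain t i k u where ae: "a = (t,i,k,u)" by (cases a) auto
  have t: "t < horizon G" and u: "u \<in> acts G t i" using a ae unfolding II_def by auto
  have Xc: "(\<lambda>n. (X n (t,i,k,u') - c) / (1 - mA t i * c)) \<longlonglongrightarrow> (x (t,i,k,u') - c) / (1 - mA t i * c)"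
    if "u' \<in> acts G t i" for u'
  proof -
    have "(t,i,k,u') \<in> II" using t that unfolding II_def by simp
    then have "(\<lambda>n. (X n (t,i,k,u') - c) * inverse (1 - mA t i * c)) \<longlonglongrightarrow> (x (t,i,k,u') - c) * inverse (1 - mA t i * c)"
      by (intro tendsto_mult_right tendsto_diff tendsto_const X)
    then show ?thesis by (simp add: divide_inverse)
  qed
  have "(\<lambda>n. c + (1 - mA t i * c) * Nrm (\<lambda>u'. (X n (t,i,k,u') - c) / (1 - mA t i * c)) (acts G t i) u)
      \<longlonglongrightarrow> c + (1 - mA t i * c) * Nrm (\<lambda>u'. (x (t,i,k,u') - c) / (1 - mA t i * c)) (acts G t i) u"
    by (intro tendsto_add tendsto_const tendsto_mult Nrm_cont[OF finite_acts Xc u])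
  then show ?thesis using a ae unfolding Rm_def by simp
qed

lemma Dc_posv:
  assumes "c > 0" "z \<in> Dc c" shows "posv z"
proof -
  have "z \<in> Delta" "\<forall>a\<in>II. c \<le> z a" using assms(2) unfolding Dc_def by auto
  then show ?thesis unfolding posv_def using assms(1) by (meson less_le_trans)
qed

lemma prof_conv:
  assumes Z: "\<And>n. Z n \<in> Delta" and z: "z \<in> Delta" and conv: "\<And>a. a \<in> II \<Longrightarrow> (\<lambda>n. Z n a) \<longlonglongrightarrow> z a"
  shows "(\<lambda>n. pmf (prof (Z n) t i h) u) \<longlonglongrightarrow> pmf (prof z t i h) u"
proof (cases "t < horizon G")
  case True
  show ?thesis
  proof (cases "(t,i,compress io1 io i h,u) \<in> II")
    case True
    then show ?thesis using conv \<open>t < horizon G\<close> by (simp add: pmf_prof Z z)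
  next
    case False
    then show ?thesis using \<open>t < horizon G\<close> by (simp add: pmf_prof Z z Delta_zero)
  qed
next
  case False
  have "(\<lambda>u. Z n (t,i,compress io1 io i h,u)) = (\<lambda>u. z (t,i,compress io1 io i h,u))" for n
    using False Delta_zero[OF Z[of n]] Delta_zero[OF z] unfolding II_def by auto
  then have "prof (Z n) t i h = prof z t i h" for n
    unfolding prof_def kbased_def strat_def by simp
  then show ?thesis by simp
qed

lemma q_cont:
  assumes c: "c > 0" and Z: "\<And>n. Z n \<in> Dc c" and z: "z \<in> Dc c"
    and conv: "\<And>a. a \<in> II \<Longrightarrow> (\<lambda>n. Z n a) \<longlonglongrightarrow> z a" and a: "a \<in> II"
  shows "(\<lambda>n. q (Z n) a) \<longlonglongrightarrow> q z a"
proof -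
  obtain t i k u where ae: "a = (t,i,k,u)" by (cases a) auto
  have t: "t < horizon G" and u: "u \<in> acts G t i" using a ae unfolding II_def by auto
  show ?thesis
  proof (cases "reach t i k")
    case False
    then show ?thesis using ae by (simp add: q_def)
  next
    case True
    define A where "A = hu_event G t i (rep t i k) u"
    have ZD: "Z n \<in> Delta" for n using Z unfolding Dc_def by auto
    have zD: "z \<in> Delta" using z unfolding Dc_def by auto
    have pc: "\<And>t i h u. (\<lambda>n. pmf (prof (Z n) t i h) u) \<longlonglongrightarrow> pmf (prof z t i h) u"
      by (rule prof_conv[OF ZD zD conv])
    have num: "(\<lambda>n. \<integral>\<omega>. indicator A \<omega> * Wr i t \<omega> \<partial>measure_pmf (play G (prof (Z n)))) \<longlonglongrightarrow>
               (\<integral>\<omega>. indicator A \<omega> * Wr i t \<omega> \<partial>measure_pmf (play G (prof z)))"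
      unfolding play_def by (rule integral_conv[OF pc])
    have den: "(\<lambda>n. measure_pmf.prob (play G (prof (Z n))) A) \<longlonglongrightarrow> measure_pmf.prob (play G (prof z)) A"
      unfolding prob_int play_def by (rule integral_conv[OF pc])
    have "measure_pmf.prob (play G (prof z)) A > 0"
      unfolding A_def using pos_hu[OF Dc_posv[OF c z] t] rep[OF True] u by blast
    then have "(\<lambda>n. cond_exp (play G (prof (Z n))) A (Wr i t)) \<longlonglongrightarrow> cond_exp (play G (prof z)) A (Wr i t)"
      unfolding cond_exp_def by (intro tendsto_divide num den) simp
    then show ?thesis using True ae by (simp add: q_def A_def)
  qed
qed

lemma Phi_cont:
  assumes c: "c > 0" and Z: "\<And>n. Z n \<in> Dc c" and z: "z \<in> Dc c"
    and conv: "\<And>a. a \<in> II \<Longrightarrow> (\<lambda>n. Z n a) \<longlonglongrightarrow> z a" and a: "a \<in> II"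
  shows "(\<lambda>n. Phi lam (Z n) a) \<longlonglongrightarrow> Phi lam z a"
proof -
  obtain t i k u where ae: "a = (t,i,k,u)" by (cases a) auto
  have t: "t < horizon G" and u: "u \<in> acts G t i" using a ae unfolding II_def by auto
  have qc: "(\<lambda>n. q (Z n) (t,i,k,u')) \<longlonglongrightarrow> q z (t,i,k,u')" if "u' \<in> acts G t i" for u'
  proof (rule q_cont[OF c Z z conv])
    show "(t,i,k,u') \<in> II" using t that unfolding II_def by simp
  qed
  have dpos: "(\<Sum>u'\<in>acts G t i. exp (lam * q z (t,i,k,u'))) \<noteq> 0"
    using acts_ne[OF t] by (intro sum_pos[THEN less_imp_neq, symmetric]) auto
  have "(\<lambda>n. exp (lam * q (Z n) (t,i,k,u)) / (\<Sum>u'\<in>acts G t i. exp (lam * q (Z n) (t,i,k,u')))) \<longlonglongrightarrow>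
        exp (lam * q z (t,i,k,u)) / (\<Sum>u'\<in>acts G t i. exp (lam * q z (t,i,k,u')))"
    by (intro tendsto_divide tendsto_exp tendsto_mult tendsto_const tendsto_sum qc u dpos)
  then show ?thesis using a ae unfolding Phi_def by simp
qed

lemma fixpt:
  assumes lam: "lam \<ge> 0"
  shows "\<exists>z\<in>Dc (cc lam). Phi lam z = z"
proof -
  define c where "c = cc lam"
  have c: "c > 0" unfolding c_def by (rule cc_pos)
  have mc: "\<And>t i. mA t i * c < 1" unfolding c_def by (rule mA_cc[OF lam])
  define F where "F x = Phi lam (Rm c x)" for x
  have FD: "F x \<in> Dc c" for x
  proof -
    have "Rm c x \<in> Delta" using Rm_Dc[OF c mc] unfolding Dc_def by auto
    then show ?thesis unfolding F_def c_def by (rule Phi_Dc[OF _ lam])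
  qed
  have "\<exists>x\<in>cube II. F x = x"
  proof (rule brouwer_fin[OF finite_II])
    fix x assume "x \<in> cube II"
    show "F x \<in> cube II" using FD[of x] Delta_cube unfolding Dc_def by auto
  next
    fix X x a
    assume X: "\<And>m. X m \<in> cube II" and x: "x \<in> cube II"
      and conv: "\<And>a. a \<in> II \<Longrightarrow> (\<lambda>m. X m a) \<longlonglongrightarrow> x a" and a: "a \<in> II"
    show "(\<lambda>m. F (X m) a) \<longlonglongrightarrow> F x a"
      unfolding F_def
      by (rule Phi_cont[OF c Rm_Dc[OF c mc] Rm_Dc[OF c mc] Rm_cont[OF conv] a])
  qed
  then obtain x where x: "x \<in> cube II" "F x = x" by blast
  then have xD: "x \<in> Dc c" using FD[of x] by simp
  then have "Rm c x = x" by (rule Rm_id[OF c mc])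
  then have "Phi lam x = x" using x(2) unfolding F_def by simp
  then show ?thesis using xD unfolding c_def by blast
qed

end



lemma exp_neg_lim:
  assumes "(D::real) > 0"
  shows "(\<lambda>n. exp (- ((real n + 1) * D))) \<longlonglongrightarrow> 0"
proof -
  have e: "exp (- ((real n + 1) * D)) = exp (- D) ^ Suc n" for n
  proof -
    have "exp (- ((real n + 1) * D)) = exp (real (Suc n) * (- D))" by (simp add: algebra_simps)
    also have "\<dots> = exp (- D) ^ Suc n" by (rule exp_of_nat_mult)
    finally show ?thesis .
  qed
  have "norm (exp (- D)) < 1" using assms by simp
  then have "(\<lambda>n. exp (- D) ^ n) \<longlonglongrightarrow> 0" by (rule LIMSEQ_power_zero)
  then have "(\<lambda>n. exp (- D) ^ Suc n) \<longlonglongrightarrow> 0" by (rule LIMSEQ_Suc)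
  then show ?thesis unfolding e .
qed

context gsetup
begin

lemma Wr_eq: "Wr i \<tau> = (\<lambda>\<omega>. \<Sum>t\<in>{\<tau>..<horizon G}. reward G i \<omega> t)"
  by (rule ext) (simp add: Wr_def)

lemma Qeq:
  assumes z: "posv z" and \<tau>: "\<tau> < horizon G" and h: "adm \<tau> i h" and u: "u \<in> acts G \<tau> i"
  shows "cond_exp (play G (prof z)) (hu_event G \<tau> i h u) (Wr i \<tau>) = q z (\<tau>, i, compress io1 io i h, u)"
proof -
  have zD: "z \<in> Delta" using z unfolding posv_def by simp
  have "info_state G io1 io i (kbased io1 io (strat z))"
    using msi valid_strat[OF zD] unfolding mutually_sufficient_def by blast
  from msi_values[OF valid_strat[OF zD] this] obtain v where v:
    "\<forall>\<tau><horizon G. \<forall>h u. measure_pmf.prob (play G (prof z)) (hu_event G \<tau> i h u) > 0 \<longrightarrow>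
     cond_exp (play G (prof z)) (hu_event G \<tau> i h u) (Wr i \<tau>) = v \<tau> (compress io1 io i h) u"
    unfolding prof_def[symmetric] Wr_eq by blast
  define k where "k = compress io1 io i h"
  have r: "reach \<tau> i k" unfolding reach_def k_def using h by blast
  have rp: "compress io1 io i (rep \<tau> i k) = k" "adm \<tau> i (rep \<tau> i k)" using rep[OF r] by auto
  have p1: "measure_pmf.prob (play G (prof z)) (hu_event G \<tau> i h u) > 0"
    using pos_hu[OF z \<tau>] h u by blast
  have p2: "measure_pmf.prob (play G (prof z)) (hu_event G \<tau> i (rep \<tau> i k) u) > 0"
    using pos_hu[OF z \<tau>] rp(2) u by blast
  have "cond_exp (play G (prof z)) (hu_event G \<tau> i h u) (Wr i \<tau>) = v \<tau> k u"
    using v \<tau> p1 unfolding k_def by blast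
  also have "\<dots> = cond_exp (play G (prof z)) (hu_event G \<tau> i (rep \<tau> i k) u) (Wr i \<tau>)"
    using v \<tau> p2 rp(1) by metis
  also have "\<dots> = q z (\<tau>, i, k, u)" using r by (simp add: q_def)
  finally show ?thesis unfolding k_def .
qed

lemma main: "\<exists>\<rho> Q. valid_kstrat G \<rho> \<and> sequential_equilibrium G (kbased io1 io \<rho>) Q"
proof -
  define lamb where "lamb n = real n + 1" for n :: nat
  have "\<forall>n. \<exists>z. z \<in> Dc (cc (lamb n)) \<and> Phi (lamb n) z = z"
    using fixpt unfolding lamb_def by (metis add_nonneg_nonneg of_nat_0_le_iff zero_le_one)
  then obtain X where X: "\<And>n. X n \<in> Dc (cc (lamb n))" "\<And>n. Phi (lamb n) (X n) = X n"
    by metis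
  have XD: "X n \<in> Delta" for n using X(1) unfolding Dc_def by auto
  have Xp: "posv (X n)" for n by (rule Dc_posv[OF cc_pos X(1)])
  have Xnn: "0 \<le> X n a" if "a \<in> II" for n a using XD[of n] that unfolding Delta_def by blast
  have Xeq: "X n (t,i,k,u) = exp (lamb n * q (X n) (t,i,k,u)) / (\<Sum>u'\<in>acts G t i. exp (lamb n * q (X n) (t,i,k,u')))"
    if "(t,i,k,u) \<in> II" for n t i k u
  proof -
    have "X n (t,i,k,u) = Phi (lamb n) (X n) (t,i,k,u)" using X(2)[of n] by simp
    then show ?thesis using that by (simp add: Phi_def)
  qed
  
  define Y where "Y ab n = (if snd ab then X n (fst ab) else q (X n) (fst ab))" for ab n
  have "\<exists>\<sigma>. strict_mono \<sigma> \<and> (\<forall>ab\<in>II \<times> (UNIV :: bool set). convergent (\<lambda>n. Y ab (\<sigma> n)))"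
  proof (rule finite_BW[where B = "real (horizon G) + 1"])
    show "finite (II \<times> (UNIV :: bool set))" using finite_II by simp
    fix ab n assume ab: "ab \<in> II \<times> (UNIV :: bool set)"
    show "\<bar>Y ab n\<bar> \<le> real (horizon G) + 1"
    proof (cases "snd ab")
      case True
      have "X n (fst ab) \<le> 1" using Delta_le1[OF XD] ab by auto
      then show ?thesis using True Xnn[of "fst ab" n] ab unfolding Y_def by auto
    next
      case False
      then show ?thesis using q_bound[OF XD, of n "fst ab"] unfolding Y_def by auto
    qed
  qed
  then obtain \<sigma> where \<sigma>: "strict_mono \<sigma>" "\<forall>ab\<in>II \<times> (UNIV :: bool set). convergent (\<lambda>n. Y ab (\<sigma> n))"
    by blast
  define xl where "xl a = lim (\<lambda>n. X (\<sigma> n) a)" for a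
  define ql where "ql a = lim (\<lambda>n. q (X (\<sigma> n)) a)" for a
  have xl: "(\<lambda>n. X (\<sigma> n) a) \<longlonglongrightarrow> xl a" if "a \<in> II" for a
  proof -
    have "convergent (\<lambda>n. Y (a, True) (\<sigma> n))" using \<sigma>(2) that by blast
    then show ?thesis unfolding xl_def Y_def by (simp add: convergent_LIMSEQ_iff)
  qed
  have ql: "(\<lambda>n. q (X (\<sigma> n)) a) \<longlonglongrightarrow> ql a" if "a \<in> II" for a
  proof -
    have "convergent (\<lambda>n. Y (a, False) (\<sigma> n))" using \<sigma>(2) that by blast
    then show ?thesis unfolding ql_def Y_def by (simp add: convergent_LIMSEQ_iff)
  qed
  define xs where "xs a = (if a \<in> II then xl a else 0)" for a
  have xs_conv: "(\<lambda>n. X (\<sigma> n) a) \<longlonglongrightarrow> xs a" for a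
  proof (cases "a \<in> II")
    case True then show ?thesis using xl[OF True] by (simp add: xs_def)
  next
    case False
    then have "X (\<sigma> n) a = 0" for n using Delta_zero[OF XD] by blast
    then show ?thesis using False by (simp add: xs_def)
  qed
  have xsD: "xs \<in> Delta"
  proof -
    have z1: "\<forall>a. a \<notin> II \<longrightarrow> xs a = 0" by (simp add: xs_def)
    have z2: "\<forall>a\<in>II. 0 \<le> xs a"
    proof
      fix a assume a: "a \<in> II"
      show "0 \<le> xs a" by (rule LIMSEQ_le_const[OF xs_conv]) (use Xnn[OF a] in blast)
    qed
    have z3: "\<forall>t<horizon G. \<forall>i k. (\<Sum>u\<in>acts G t i. xs (t,i,k,u)) = 1"
    proof (intro allI impI)
      fix t i k assume t: "t < horizon G"
      have "(\<lambda>n. \<Sum>u\<in>acts G t i. X (\<sigma> n) (t,i,k,u)) \<longlonglongrightarrow> (\<Sum>u\<in>acts G t i. xs (t,i,k,u))"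
        by (intro tendsto_sum xs_conv)
      moreover have "(\<Sum>u\<in>acts G t i. X (\<sigma> n) (t,i,k,u)) = 1" for n
        using XD[of "\<sigma> n"] t unfolding Delta_def by blast
      ultimately show "(\<Sum>u\<in>acts G t i. xs (t,i,k,u)) = 1"
        using LIMSEQ_unique[OF _ tendsto_const] by simp
    qed
    show ?thesis unfolding Delta_def mem_Collect_eq using z1 z2 z3 by blast
  qed
  define g where "g = prof xs"
  define gn where "gn n = prof (X (\<sigma> n))" for n
  define Wl where "Wl i \<tau> = (\<lambda>\<omega>. \<Sum>t\<in>{\<tau>..<horizon G}. reward G i \<omega> t)" for i \<tau>
  define Qn where "Qn n \<tau> i h u = (if measure_pmf.prob (play G (gn n)) (hu_event G \<tau> i h u) > 0
        then cond_exp (play G (gn n)) (hu_event G \<tau> i h u) (\<lambda>\<omega>. \<Sum>t\<in>{\<tau>..<horizon G}. reward G i \<omega> t) else 0)"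
    for n \<tau> i h u
  define Q where "Q \<tau> i h u = (if \<tau> < horizon G \<and> adm \<tau> i h \<and> u \<in> acts G \<tau> i
        then ql (\<tau>, i, compress io1 io i h, u) else 0)" for \<tau> i h u
  have Qn_conv: "(\<lambda>n. Qn n t i h u) \<longlonglongrightarrow> Q t i h u" if t: "t < horizon G" for t i h u
  proof (cases "adm t i h \<and> u \<in> acts G t i")
    case True
    have a: "(t, i, compress io1 io i h, u) \<in> II" using t True unfolding II_def by simp
    have "Qn n t i h u = q (X (\<sigma> n)) (t, i, compress io1 io i h, u)" for n
    proof -
      have "measure_pmf.prob (play G (gn n)) (hu_event G t i h u) > 0"
        unfolding gn_def using pos_hu[OF Xp t] True by blast
      then show ?thesis unfolding Qn_def using Qeq[OF Xp[of "\<sigma> n"] t, of i h u] True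
        unfolding gn_def Wr_eq by simp
    qed
    then show ?thesis using ql[OF a] True t unfolding Q_def by simp
  next
    case False
    have "Qn n t i h u = 0" for n
      unfolding Qn_def gn_def using pos_hu[OF Xp[of "\<sigma> n"] t, of i h u] False by simp
    moreover have "Q t i h u = 0" using False unfolding Q_def by auto
    ultimately show ?thesis by simp
  qed
  have pmf_conv: "(\<lambda>n. pmf (gn n t i h) u) \<longlonglongrightarrow> pmf (g t i h) u" if t: "t < horizon G" for t i h u
    unfolding gn_def g_def pmf_prof[OF XD t] pmf_prof[OF xsD t] by (rule xs_conv)
  have fc: "fully_consistent G g Q"
    unfolding fully_consistent_def
  proof (intro exI conjI allI impI)
    show "valid_profile G (gn n)" for n unfolding gn_def by (rule valid_prof[OF XD])
    show "fully_mixed G (gn n)" for n unfolding gn_def by (rule mixed_prof[OF Xp])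
    show "(\<lambda>n. pmf (gn n t i h) u) \<longlonglongrightarrow> pmf (g t i h) u" if "t < horizon G" for t i h u
      by (rule pmf_conv[OF that])
    show "(\<lambda>n. Qn n t i h u) \<longlonglongrightarrow> Q t i h u" if "t < horizon G" for t i h u
      by (rule Qn_conv[OF that])
    show "Qn n \<tau> i h u = cond_exp (play G (gn n)) (hu_event G \<tau> i h u) (\<lambda>\<omega>. \<Sum>t = \<tau>..<horizon G. reward G i \<omega> t)"
      if "\<tau> < horizon G" "0 < measure_pmf.prob (play G (gn n)) (hu_event G \<tau> i h u)" for n \<tau> i h u
      using that unfolding Qn_def by simp
  qed
  have sr: "seq_rational G g Q"
    unfolding seq_rational_def
  proof (intro allI impI subsetI)
    fix t i h u assume t: "t < horizon G" and u: "u \<in> set_pmf (g t i h)"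
    define k where "k = compress io1 io i h"
    have xpos: "xs (t,i,k,u) > 0"
    proof -
      have "pmf (g t i h) u \<noteq> 0" using u by (simp add: set_pmf_eq)
      then have "xs (t,i,k,u) \<noteq> 0" unfolding g_def pmf_prof[OF xsD t] k_def .
      moreover have "xs (t,i,k,u) \<ge> 0"
        using xsD Delta_zero[OF xsD, of "(t,i,k,u)"] unfolding Delta_def by (cases "(t,i,k,u) \<in> II") auto
      ultimately show ?thesis by simp
    qed
    have aII: "(t,i,k,u) \<in> II" using xpos Delta_zero[OF xsD, of "(t,i,k,u)"] by force
    then have uA: "u \<in> acts G t i" unfolding II_def by simp
    have "Q t i h u' \<le> Q t i h u" if u': "u' \<in> acts G t i" for u'
    proof (cases "adm t i h")
      case False
      then show ?thesis unfolding Q_def by simp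
    next
      case True
      have a'II: "(t,i,k,u') \<in> II" using t u' unfolding II_def by simp
      show ?thesis
      proof (rule ccontr)
        assume "\<not> Q t i h u' \<le> Q t i h u"
        then have lt: "ql (t,i,k,u) < ql (t,i,k,u')" using True t u' uA unfolding Q_def k_def by simp
        define D where "D = ql (t,i,k,u') - ql (t,i,k,u)"
        have D: "D > 0" using lt unfolding D_def by simp
        have dconv: "(\<lambda>n. q (X (\<sigma> n)) (t,i,k,u') - q (X (\<sigma> n)) (t,i,k,u)) \<longlonglongrightarrow> D"
          unfolding D_def by (intro tendsto_diff ql a'II aII)
        have ev: "\<forall>\<^sub>F n in sequentially. D / 2 < q (X (\<sigma> n)) (t,i,k,u') - q (X (\<sigma> n)) (t,i,k,u)"
          by (rule order_tendstoD(1)[OF dconv]) (use D in simp)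
        have bound: "X (\<sigma> n) (t,i,k,u) \<le> exp (- ((real n + 1) * (D / 2)))"
          if dn: "D / 2 < q (X (\<sigma> n)) (t,i,k,u') - q (X (\<sigma> n)) (t,i,k,u)" for n
        proof -
          define L where "L = lamb (\<sigma> n)"
          define qa where "qa = q (X (\<sigma> n)) (t,i,k,u)"
          define qb where "qb = q (X (\<sigma> n)) (t,i,k,u')"
          have L: "L \<ge> real n + 1" unfolding L_def lamb_def using seq_suble[OF \<sigma>(1), of n] by simp
          have S: "exp (L * qb) \<le> (\<Sum>u''\<in>acts G t i. exp (L * q (X (\<sigma> n)) (t,i,k,u'')))"
            unfolding qb_def by (rule member_le_sum) (use u' in auto)
          have "X (\<sigma> n) (t,i,k,u) = exp (L * qa) / (\<Sum>u''\<in>acts G t i. exp (L * q (X (\<sigma> n)) (t,i,k,u'')))"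
            unfolding L_def qa_def by (rule Xeq[OF aII])
          also have "\<dots> \<le> exp (L * qa) / exp (L * qb)"
          proof (rule divide_left_mono[OF S])
            have "0 < (\<Sum>u''\<in>acts G t i. exp (L * q (X (\<sigma> n)) (t,i,k,u'')))"
              using S by (meson exp_gt_zero less_le_trans)
            then show "0 < (\<Sum>u''\<in>acts G t i. exp (L * q (X (\<sigma> n)) (t,i,k,u''))) * exp (L * qb)" by simp
          qed simp
          also have "\<dots> = exp (- (L * (qb - qa)))" by (simp add: exp_diff[symmetric] algebra_simps)
          also have "\<dots> \<le> exp (- ((real n + 1) * (D / 2)))"
          proof -
            have "(real n + 1) * (D / 2) \<le> L * (D / 2)" using L D by (intro mult_right_mono) auto
            also have "\<dots> \<le> L * (qb - qa)" using dn L unfolding qa_def qb_def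
              by (intro mult_left_mono) auto
            finally show ?thesis by simp
          qed
          finally show ?thesis .
        qed
        have "(\<lambda>n. X (\<sigma> n) (t,i,k,u)) \<longlonglongrightarrow> 0"
        proof (rule tendsto_sandwich[of "\<lambda>_. 0" _ _ "\<lambda>n. exp (- ((real n + 1) * (D / 2)))"])
          show "\<forall>\<^sub>F n in sequentially. 0 \<le> X (\<sigma> n) (t,i,k,u)" using Xnn[OF aII] by simp
          show "\<forall>\<^sub>F n in sequentially. X (\<sigma> n) (t,i,k,u) \<le> exp (- ((real n + 1) * (D / 2)))"
            using ev by (rule eventually_mono) (rule bound)
          show "(\<lambda>n. exp (- ((real n + 1) * (D / 2)))) \<longlonglongrightarrow> 0" by (rule exp_neg_lim) (use D in simp)
        qed simp
        then have "xs (t,i,k,u) = 0" using LIMSEQ_unique[OF xs_conv] by blast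
        then show False using xpos by simp
      qed
    qed
    then show "u \<in> {u \<in> acts G t i. \<forall>u'\<in>acts G t i. Q t i h u' \<le> Q t i h u}" using uA by blast
  qed
  have "sequential_equilibrium G g Q"
    unfolding sequential_equilibrium_def using valid_prof[OF xsD] sr fc by (simp add: g_def)
  then show ?thesis using valid_strat[OF xsD] unfolding g_def prof_def by blast
qed

end


theorem theorem3:
  fixes G :: "('p::finite, 'x::finite, 'u::finite, 'y::finite, 'w::finite, 'h::finite) game"
    and io1 :: "'p \<Rightarrow> 'h \<Rightarrow> 'k::finite"
    and io :: "nat \<Rightarrow> 'p \<Rightarrow> 'k \<Rightarrow> ('u \<times> 'y) \<Rightarrow> 'k"
  assumes "wf_game G"
    and "mutually_sufficient G io1 io"
  shows "\<exists>\<rho> Q. valid_kstrat G \<rho> \<and> sequential_equilibrium G (kbased io1 io \<rho>) Q"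
proof -
  interpret gsetup G io1 io using assms by unfold_locales
  show ?thesis by (rule main)
qed

end
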